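(* Let $\Omega_1,\Omega_2\subset\mathbb{R}^2$ be compact sets starshaped with respect to the origin, with radial functions $f_{\Omega_1},f_{\Omega_2}$ satisfying $f_{\Omega_1}\ge r_0$ and $f_{\Omega_2}\ge r_0$ on $[0,2\pi)$ for some $r_0>0$. Then (1) $|h(\Omega_1)-h(\Omega_2)|\leq \frac{2}{r_0^2}\|f_{\Omega_1}-f_{\Omega_2}\|_\infty$; (2) $\big||\Omega_1|-|\Omega_2|\big|\leq 2\pi\max(\|f_{\Omega_1}\|_\infty,\|f_{\Omega_2}\|_\infty)\,\|f_{\Omega_1}-f_{\Omega_2}\|_\infty$, where $\|\cdot\|_\infty$ is the supremum norm over $[0,2\pi)$.
   Context: A set $\Omega$ is starshaped with respect to the origin if it is non-empty and for every $M\in\Omega$ the segment $[0,M]$ is contained in $\Omega$. Its radial function is $f_\Omega(\theta)=\max\{\lambda\ge0 : \lambda(\cos\theta,\sin\theta)\in\Omega\}$ for $\theta\in[0,2\pi)$. $|\cdot|$ is Lebesgue measure, and $h(\Omega)=\inf\{P(E)/|E| : E\subset\Omega\text{ measurable}\}$ is the Cheeger constant, $P$ being the perimeter. *)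

theory Defs
  imports "HOL-Analysis.Analysis"
begin

text \<open>Starshaped with respect to the origin (as in the paper).\<close>
definition starshaped0 :: "(real^2) set \<Rightarrow> bool" where
  "starshaped0 \<Omega> \<longleftrightarrow> \<Omega> \<noteq> {} \<and> (\<forall>M\<in>\<Omega>. closed_segment 0 M \<subseteq> \<Omega>)"

text \<open>Unit vector in direction theta.\<close>
definition dir :: "real \<Rightarrow> real^2" where
  "dir \<theta> = vector [cos \<theta>, sin \<theta>]"

text \<open>Radial function: f(theta) = max {lambda >= 0 : lambda (cos theta, sin theta) in Omega}.\<close>
definition radial_fun :: "(real^2) set \<Rightarrow> real \<Rightarrow> real" where
  "radial_fun \<Omega> \<theta> = Sup {l. l \<ge> 0 \<and> l *\<^sub>R dir \<theta> \<in> \<Omega>}"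

text \<open>Supremum norm over [0, 2 pi).\<close>
definition sup_norm :: "(real \<Rightarrow> real) \<Rightarrow> real" where
  "sup_norm f = (SUP \<theta>\<in>{0..<2*pi}. \<bar>f \<theta>\<bar>)"

text \<open>Divergence of a vector field on R^2.\<close>
definition divergence :: "(real^2 \<Rightarrow> real^2) \<Rightarrow> real^2 \<Rightarrow> real" where
  "divergence \<phi> x = (\<Sum>i\<in>UNIV. frechet_derivative \<phi> (at x) (axis i 1) $ i)"

text \<open>Admissible test fields: C^1 with compact support, pointwise norm at most 1.\<close>
definition test_field :: "(real^2 \<Rightarrow> real^2) \<Rightarrow> bool" where
  "test_field \<phi> \<longleftrightarrow>
     (\<forall>x. \<phi> differentiable (at x)) \<and>
     (\<forall>i j. continuous_on UNIV (\<lambda>x. frechet_derivative \<phi> (at x) (axis i 1) $ j)) \<and>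
     compact (closure {x. \<phi> x \<noteq> 0}) \<and>
     (\<forall>x. norm (\<phi> x) \<le> 1)"

text \<open>De Giorgi perimeter: P(E) = sup { integral over E of div phi : phi admissible }.\<close>
definition perimeter :: "(real^2) set \<Rightarrow> ereal" where
  "perimeter E = (SUP \<phi>\<in>{\<phi>. test_field \<phi>}.
      ereal (integral\<^sup>L lebesgue (\<lambda>x. indicator E x * divergence \<phi> x)))"

text \<open>Cheeger constant: inf { P(E)/|E| : E subset Omega measurable, |E| > 0 }.\<close>
definition cheeger :: "(real^2) set \<Rightarrow> ereal" where
  "cheeger \<Omega> = (INF E\<in>{E. E \<in> sets lebesgue \<and> E \<subseteq> \<Omega> \<and> measure lebesgue E > 0}.
      perimeter E / ereal (measure lebesgue E))"

end

theory Submission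
  imports Defs
begin

lemma dir_nth [simp]: "dir t $ 1 = cos t" "dir t $ 2 = sin t"
  by (simp_all add: dir_def)

lemma norm_dir [simp]: "norm (dir t) = 1"
  by (simp add: norm_vec_def L2_set_def sum_2 dir_def)

lemma vec2_eq_iff: "(x::real^2) = y \<longleftrightarrow> x$1 = y$1 \<and> x$2 = y$2"
  by (simp add: vec_eq_iff forall_2)

lemma norm_vec2: "norm (x::real^2) = sqrt ((x$1)^2 + (x$2)^2)"
  by (simp add: norm_vec_def L2_set_def sum_2)

lemma polar_exists:
  fixes x :: "real^2"
  obtains t where "0 \<le> t" "t < 2*pi" "x = norm x *\<^sub>R dir t"
proof (cases "x = 0")
  case True then show ?thesis using that[of 0] by simp
next
  case False
  let ?n = "norm x"
  have n: "?n > 0" using False by simp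
  have "(x$1 / ?n)^2 + (x$2/?n)^2 = 1"
  proof -
    have h: "(x$1)^2 + (x$2)^2 = ?n^2" by (simp add: norm_vec2)
    have "?n^2 > 0" using n by simp
    then show ?thesis by (simp add: power_divide add_divide_distrib[symmetric] h)
  qed
  then obtain t where t: "0 \<le> t" "t < 2*pi" "x$1/?n = cos t" "x$2/?n = sin t"
    by (rule sincos_total_2pi)
  have "x$1 = ?n * cos t" "x$2 = ?n * sin t"
    using t(3,4) n by (simp_all add: divide_eq_eq mult.commute)
  then have "x = ?n *\<^sub>R dir t" by (simp add: vec2_eq_iff)
  then show ?thesis using that t by blast
qed

lemma starshaped0_zero: "starshaped0 \<Omega> \<Longrightarrow> 0 \<in> \<Omega>"
  unfolding starshaped0_def using ends_in_segment(1) by blast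

lemma starshaped0_scale:
  assumes "starshaped0 \<Omega>" "x \<in> \<Omega>" "0 \<le> c" "c \<le> 1"
  shows "c *\<^sub>R x \<in> \<Omega>"
proof -
  have "c *\<^sub>R x = (1 - c) *\<^sub>R 0 + c *\<^sub>R x" by simp
  then have "c *\<^sub>R x \<in> closed_segment 0 x"
    unfolding closed_segment_def using assms(3,4) by blast
  then show ?thesis using assms unfolding starshaped0_def by blast
qed

lemma radial_fun_props:
  assumes "compact \<Omega>" "starshaped0 \<Omega>"
  shows "0 \<le> radial_fun \<Omega> t" "radial_fun \<Omega> t *\<^sub>R dir t \<in> \<Omega>"
    "\<And>l. 0 \<le> l \<Longrightarrow> l *\<^sub>R dir t \<in> \<Omega> \<longleftrightarrow> l \<le> radial_fun \<Omega> t"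
proof -
  let ?A = "{l. l \<ge> 0 \<and> l *\<^sub>R dir t \<in> \<Omega>}"
  have A: "?A = {0..} \<inter> (\<lambda>l. l *\<^sub>R dir t) -` \<Omega>" by auto
  have "continuous_on UNIV (\<lambda>l::real. l *\<^sub>R dir t)" by (intro continuous_intros)
  then have "closed ((\<lambda>l. l *\<^sub>R dir t) -` \<Omega>)"
    using closed_vimage compact_imp_closed[OF assms(1)] by blast
  then have "closed ?A" unfolding A by (intro closed_Int) auto
  obtain R where R: "\<And>x. x \<in> \<Omega> \<Longrightarrow> norm x \<le> R"
    using compact_imp_bounded[OF assms(1)] bounded_iff by blast
  have bdd: "bdd_above ?A" by (rule bdd_aboveI[of _ R]) (auto dest: R)
  have ne: "0 \<in> ?A" using starshaped0_zero[OF assms(2)] by simp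
  have "Sup ?A \<in> ?A"
    using closed_contains_Sup[OF _ bdd \<open>closed ?A\<close>] ne by blast
  then show "0 \<le> radial_fun \<Omega> t" "radial_fun \<Omega> t *\<^sub>R dir t \<in> \<Omega>"
    unfolding radial_fun_def by auto
  fix l :: real assume l: "0 \<le> l"
  show "l *\<^sub>R dir t \<in> \<Omega> \<longleftrightarrow> l \<le> radial_fun \<Omega> t"
  proof
    assume "l *\<^sub>R dir t \<in> \<Omega>" then show "l \<le> radial_fun \<Omega> t"
      unfolding radial_fun_def using l bdd by (auto intro: cSup_upper)
  next
    assume le: "l \<le> radial_fun \<Omega> t"
    show "l *\<^sub>R dir t \<in> \<Omega>"
    proof (cases "radial_fun \<Omega> t = 0")
      case True then show ?thesis using le l starshaped0_zero[OF assms(2)] by simp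
    next
      case False
      then have pos: "radial_fun \<Omega> t > 0" using \<open>Sup ?A \<in> ?A\<close> unfolding radial_fun_def by auto
      have "(l / radial_fun \<Omega> t) *\<^sub>R (radial_fun \<Omega> t *\<^sub>R dir t) \<in> \<Omega>"
        apply (rule starshaped0_scale[OF assms(2)])
        using \<open>Sup ?A \<in> ?A\<close> pos l le unfolding radial_fun_def by auto
      then show ?thesis using pos by simp
    qed
  qed
qed

lemma radial_fun_bound:
  assumes "compact \<Omega>" "starshaped0 \<Omega>"
  obtains R where "R \<ge> 0" "\<And>t. radial_fun \<Omega> t \<le> R" "\<And>x. x \<in> \<Omega> \<Longrightarrow> norm x \<le> R"
proof -
  obtain R where R: "\<And>x. x \<in> \<Omega> \<Longrightarrow> norm x \<le> R"
    using compact_imp_bounded[OF assms(1)] bounded_iff by blast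
  have "R \<ge> 0" using R[OF starshaped0_zero[OF assms(2)]] by simp
  moreover have "radial_fun \<Omega> t \<le> R" for t
    using R[OF radial_fun_props(2)[OF assms, of t]] radial_fun_props(1)[OF assms, of t] by simp
  ultimately show ?thesis using that R by blast
qed

lemma mem_starshaped_iff:
  assumes "compact \<Omega>" "starshaped0 \<Omega>" "0 \<le> t" "t < 2*pi" "0 \<le> l"
  shows "l *\<^sub>R dir t \<in> \<Omega> \<longleftrightarrow> l \<le> radial_fun \<Omega> t"
  using radial_fun_props(3)[OF assms(1,2) assms(5)] .

definition ndir :: "real \<Rightarrow> real^2" where "ndir t = vector [- sin t, cos t]"

lemma ndir_nth [simp]: "ndir t $ 1 = - sin t" "ndir t $ 2 = cos t"
  by (simp_all add: ndir_def)

lemma dir_alt: "dir t = cos t *\<^sub>R axis 1 1 + sin t *\<^sub>R axis 2 1"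
  by (simp add: vec2_eq_iff axis_def)

lemma ndir_alt: "ndir t = (- sin t) *\<^sub>R axis 1 1 + cos t *\<^sub>R axis 2 1"
  by (simp add: vec2_eq_iff axis_def)

lemma has_derivative_dir: "(dir has_derivative (\<lambda>h. h *\<^sub>R ndir t)) (at t within S)"
  unfolding dir_alt[abs_def] ndir_alt
  by (rule derivative_eq_intros refl | simp add: algebra_simps)+

lemma has_derivative_ndir: "(ndir has_derivative (\<lambda>h. - h *\<^sub>R dir t)) (at t within S)"
  unfolding dir_alt ndir_alt[abs_def]
  by (rule derivative_eq_intros refl | simp add: algebra_simps)+

lemma has_derivative_nth: "((\<lambda>v::real^'n. v $ i) has_derivative (\<lambda>h. h $ i)) (at v within S)"
  by (simp add: bounded_linear_imp_has_derivative bounded_linear_vec_nth)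

definition pol :: "real^2 \<Rightarrow> real^2" where "pol v = (v$1) *\<^sub>R dir (v$2)"
definition pol' :: "real^2 \<Rightarrow> real^2 \<Rightarrow> real^2" where
  "pol' v h = (h$1) *\<^sub>R dir (v$2) + (v$1 * h$2) *\<^sub>R ndir (v$2)"

lemma has_derivative_pol: "(pol has_derivative pol' v) (at v within S)"
proof -
  have "((\<lambda>v. (v$1) *\<^sub>R dir (v$2)) has_derivative
     (\<lambda>h. (v$1) *\<^sub>R ((h$2) *\<^sub>R ndir (v$2)) + (h$1) *\<^sub>R dir (v$2))) (at v within S)"
    by (rule has_derivative_scaleR has_derivative_nth
        has_derivative_compose[OF has_derivative_nth has_derivative_dir])+
  then show ?thesis unfolding pol_def[abs_def] pol'_def[abs_def]
    by (rule has_derivative_eq_rhs) (auto simp: algebra_simps fun_eq_iff)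
qed

lemma cs_aux: "a * (cos t * cos t) + a * (sin t * sin t) = (a::real)"
  by (metis distrib_left mult_1_right sin_cos_squared_add3)

lemma det_pol': "det (matrix (pol' v)) = v$1"
proof -
  show ?thesis
    by (simp add: det_2 matrix_def pol'_def axis_def algebra_simps cs_aux)
qed

definition hpol :: "real^2 \<Rightarrow> real^2" where "hpol v = sqrt (2 * v$1) *\<^sub>R dir (v$2)"
definition hpol' :: "real^2 \<Rightarrow> real^2 \<Rightarrow> real^2" where
  "hpol' v h = (h$1 / sqrt (2 * v$1)) *\<^sub>R dir (v$2) + (sqrt (2 * v$1) * h$2) *\<^sub>R ndir (v$2)"

lemma has_derivative_hpol:
  assumes "v$1 > 0"
  shows "(hpol has_derivative hpol' v) (at v within S)"
proof -
  have d: "((\<lambda>v. sqrt (2 * v$1)) has_derivative (\<lambda>h. h$1 / sqrt (2 * v$1))) (at v within S)"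
  proof -
    have "((\<lambda>v. sqrt (2 * v$1)) has_derivative (\<lambda>h. (inverse (sqrt (2 * v$1)) / 2) * (2 * h$1))) (at v within S)"
      using assms
      by (intro has_derivative_compose[of "\<lambda>v. 2 * v$1" _ v S sqrt, unfolded o_def]
           has_derivative_mult_right has_derivative_nth DERIV_real_sqrt[unfolded has_field_derivative_def, THEN has_derivative_at_withinI]) simp
    then show ?thesis
      by (rule has_derivative_eq_rhs) (auto simp: fun_eq_iff field_simps)
  qed
  have "((\<lambda>v. sqrt (2 * v$1) *\<^sub>R dir (v$2)) has_derivative
     (\<lambda>h. sqrt (2 * v$1) *\<^sub>R ((h$2) *\<^sub>R ndir (v$2)) + (h$1 / sqrt (2 * v$1)) *\<^sub>R dir (v$2))) (at v within S)"
    by (rule has_derivative_scaleR d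
        has_derivative_compose[OF has_derivative_nth has_derivative_dir])+
  then show ?thesis unfolding hpol_def[abs_def] hpol'_def[abs_def]
    by (rule has_derivative_eq_rhs) (auto simp: algebra_simps fun_eq_iff)
qed

lemma det_hpol':
  assumes "v$1 > 0"
  shows "det (matrix (hpol' v)) = 1"
proof -
  have s: "sqrt (2 * v$1) > 0" using assms by simp
  show ?thesis
    using s cs_aux[of 1 "v$2"] by (simp add: det_2 matrix_def hpol'_def axis_def field_simps)
qed

lemma borel_lebesgue: "(A::'a::euclidean_space set) \<in> sets borel \<Longrightarrow> A \<in> sets lebesgue"
  by (simp add: sets_completionI_sets)

lemma has_integral_one_measure:
  "S \<in> lmeasurable \<Longrightarrow> ((\<lambda>x. 1::real) has_integral measure lebesgue S) S"
  by (simp add: has_integral_iff lmeasurable_iff_integrable_on lmeasure_integral)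

lemma measure_cbox2:
  assumes "a$1 \<le> b$1" "a$2 \<le> b$2"
  shows "measure lebesgue (cbox a (b::real^2)) = (b$1 - a$1) * (b$2 - a$2)"
proof -
  have "cbox a b \<noteq> {}" using assms by (auto simp: mem_box_cart forall_2)
  then have "measure lborel (cbox a b) = (\<Prod>i\<in>UNIV. b $ i - a $ i)"
    by (rule content_cbox_cart)
  then show ?thesis by (simp add: UNIV_2)
qed

lemma strip_measure:
  fixes T1 T2 :: "(real^2) set" and F :: "real \<Rightarrow> real"
  assumes T1: "T1 \<in> sets lebesgue" and T2: "T2 \<in> lmeasurable"
    and d: "0 \<le> \<delta>" and B: "0 \<le> B" and c: "0 \<le> c"
    and box: "T1 \<subseteq> {v. 0 < v$1 \<and> v$1 \<le> B \<and> 0 \<le> v$2 \<and> v$2 \<le> c}"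
    and strip: "\<And>v. v \<in> T1 - T2 \<Longrightarrow> F (v$2) < v$1 \<and> v$1 \<le> F (v$2) + \<delta>"
  shows "measure lebesgue T1 \<le> measure lebesgue T2 + c * \<delta>"
proof -
  define U where "U = T1 - T2"
  have bT1: "bounded T1"
  proof -
    have "T1 \<subseteq> cbox (vector [0, 0]) (vector [B, c])"
      using box by (auto simp: mem_box_cart forall_2)
    then show ?thesis using bounded_cbox bounded_subset by blast
  qed
  have T1m: "T1 \<in> lmeasurable" using bT1 T1 bounded_set_imp_lmeasurable by blast
  have Um: "U \<in> lmeasurable" unfolding U_def using T1m T2 by blast
  have "measure lebesgue T1 \<le> measure lebesgue (T2 \<union> U)"
    by (rule measure_mono_fmeasurable) (use T1 T2 Um T1m in \<open>auto simp: U_def\<close>)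
  also have "\<dots> \<le> measure lebesgue T2 + measure lebesgue U"
    by (rule measure_Un_le) (use T2 Um in auto)
  finally have le1: "measure lebesgue T1 \<le> measure lebesgue T2 + measure lebesgue U" .
  define e :: "real^2" where "e = axis 1 1"
  define V where "V k = (+) ((real k * \<delta>) *\<^sub>R e) ` U" for k :: nat
  have Vm: "V k \<in> lmeasurable" for k unfolding V_def by (rule measurable_translation[OF Um])
  have Vmeas: "measure lebesgue (V k) = measure lebesgue U" for k
    unfolding V_def by (rule measure_translation)
  have key: "real N * measure lebesgue U \<le> c * (B + real N * \<delta>)" for N :: nat
  proof -
    have disj: "pairwise (\<lambda>i j. disjnt (V i) (V j)) {..<N}"
    proof -
      have "disjnt (V k) (V j)" if kj: "k < j" for k j
      proof -
        have False if x1: "x \<in> V k" and x2: "x \<in> V j" for x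
        proof -
          obtain u where u: "u \<in> U" "x = (real k * \<delta>) *\<^sub>R e + u" using x1 unfolding V_def by auto
          obtain w where w: "w \<in> U" "x = (real j * \<delta>) *\<^sub>R e + w" using x2 unfolding V_def by auto
          have u2: "u$2 = x$2" "w$2 = x$2"
            using arg_cong[OF u(2), of "\<lambda>y. y$2"] arg_cong[OF w(2), of "\<lambda>y. y$2"]
            by (simp_all add: e_def axis_def)
          have u1: "u$1 = x$1 - real k * \<delta>" "w$1 = x$1 - real j * \<delta>"
            using arg_cong[OF u(2), of "\<lambda>y. y$1"] arg_cong[OF w(2), of "\<lambda>y. y$1"]
            by (simp_all add: e_def axis_def)
          have "F (x$2) < w$1" using strip[of w] w(1) u2 unfolding U_def by auto
          moreover have "u$1 \<le> F (x$2) + \<delta>" using strip[of u] u(1) u2 unfolding U_def by auto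
          moreover have "real k * \<delta> + \<delta> \<le> real j * \<delta>"
          proof -
            have "real k + 1 \<le> real j" using kj by simp
            then have "(real k + 1) * \<delta> \<le> real j * \<delta>" using d by (rule mult_right_mono)
            then show ?thesis by (simp add: algebra_simps)
          qed
          ultimately show False using u1 by linarith
        qed
        then show ?thesis unfolding disjnt_def by blast
      qed
      then show ?thesis unfolding pairwise_def
        by (metis disjnt_sym nat_neq_iff)
    qed
    have "measure lebesgue (\<Union>k\<in>{..<N}. V k) = (\<Sum>k\<in>{..<N}. measure lebesgue (V k))"
      by (rule measure_UNION') (use Vm disj in auto)
    also have "\<dots> = real N * measure lebesgue U" by (simp add: Vmeas)
    finally have eq: "measure lebesgue (\<Union>k\<in>{..<N}. V k) = real N * measure lebesgue U" .
    have sub: "(\<Union>k\<in>{..<N}. V k) \<subseteq> cbox (vector [0, 0]) (vector [B + real N * \<delta>, c])"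
    proof
      fix x assume "x \<in> (\<Union>k\<in>{..<N}. V k)"
      then obtain k u where k: "k < N" and u: "u \<in> U" "x = (real k * \<delta>) *\<^sub>R e + u"
        unfolding V_def by auto
      have ub: "0 < u$1" "u$1 \<le> B" "0 \<le> u$2" "u$2 \<le> c" using u(1) box unfolding U_def by auto
      have "real k * \<delta> \<le> real N * \<delta>" using k d by (simp add: mult_right_mono)
      moreover have "0 \<le> real k * \<delta>" using d by simp
      ultimately show "x \<in> cbox (vector [0, 0]) (vector [B + real N * \<delta>, c])"
        using u(2) ub by (auto simp: mem_box_cart forall_2 e_def axis_def)
    qed
    have "measure lebesgue (\<Union>k\<in>{..<N}. V k) \<le> measure lebesgue (cbox (vector [0, 0]) (vector [B + real N * \<delta>, c]) :: (real^2) set)"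
      by (rule measure_mono_fmeasurable[OF sub]) (use Vm in auto)
    also have "\<dots> = (B + real N * \<delta>) * c"
      using B c d by (subst measure_cbox2) auto
    finally show ?thesis using eq by (simp add: mult.commute)
  qed
  have "measure lebesgue U \<le> c * \<delta>"
  proof (rule ccontr)
    assume "\<not> ?thesis"
    then have pos: "measure lebesgue U - c * \<delta> > 0" by simp
    obtain N :: nat where N: "c * B / (measure lebesgue U - c * \<delta>) < real N"
      using reals_Archimedean2 by blast
    have "c * B < real N * (measure lebesgue U - c * \<delta>)"
      using N pos by (simp add: divide_less_eq mult.commute)
    moreover have "real N * measure lebesgue U \<le> c * (B + real N * \<delta>)" by (rule key)
    ultimately show False by (simp add: algebra_simps)
  qed
  then show ?thesis using le1 by simp
qed

lemma Arg2pi_cis': "0 \<le> a \<Longrightarrow> a < 2*pi \<Longrightarrow> Arg2pi (cis a) = a"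
  by (rule Arg2pi_unique[of 1]) (simp_all add: cis_conv_exp)

lemma dir_inj:
  assumes "0 \<le> a" "a < 2*pi" "0 \<le> b" "b < 2*pi" "dir a = dir b"
  shows "a = b"
proof -
  have "cos a = cos b" "sin a = sin b"
    using arg_cong[OF assms(5), of "\<lambda>y. y$1"] arg_cong[OF assms(5), of "\<lambda>y. y$2"] by simp_all
  then have "cis a = cis b" by (intro complex_eqI) simp_all
  then have "Arg2pi (cis a) = Arg2pi (cis b)" by (rule arg_cong)
  then show ?thesis by (simp only: Arg2pi_cis'[OF assms(1,2)] Arg2pi_cis'[OF assms(3,4)])
qed

definition PP :: "(real^2) set" where "PP = {v. 0 < v$1 \<and> 0 \<le> v$2 \<and> v$2 < 2*pi}"

lemma norm_hpol: "0 \<le> v$1 \<Longrightarrow> norm (hpol v) = sqrt (2 * v$1)"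
  by (simp add: hpol_def)

lemma inj_hpol: "inj_on hpol PP"
proof
  fix v w assume v: "v \<in> PP" and w: "w \<in> PP" and eq: "hpol v = hpol w"
  have "sqrt (2 * v$1) = sqrt (2 * w$1)"
    using arg_cong[OF eq, of norm] v w by (simp add: norm_hpol PP_def)
  then have 1: "v$1 = w$1" by simp
  have "sqrt (2 * v$1) > 0" using v by (simp add: PP_def)
  then have "dir (v$2) = dir (w$2)" using eq 1 by (simp add: hpol_def)
  then have "v$2 = w$2" using v w by (intro dir_inj) (auto simp: PP_def)
  then show "v = w" using 1 by (simp add: vec2_eq_iff)
qed

lemma continuous_hpol: "continuous_on UNIV hpol"
  unfolding hpol_def[abs_def] dir_alt by (intro continuous_intros)

lemma PP_borel: "PP \<in> sets borel"
  unfolding PP_def by measurable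

lemma measure_starshaped:
  assumes cp: "compact \<Omega>" and st: "starshaped0 \<Omega>"
  defines "T \<equiv> {v \<in> PP. v$1 \<le> (radial_fun \<Omega> (v$2))^2 / 2}"
  shows "T \<in> lmeasurable" "measure lebesgue \<Omega> = measure lebesgue T"
    "\<And>v. v \<in> PP \<Longrightarrow> v \<in> T \<longleftrightarrow> v$1 \<le> (radial_fun \<Omega> (v$2))^2 / 2"
proof -
  show "\<And>v. v \<in> PP \<Longrightarrow> v \<in> T \<longleftrightarrow> v$1 \<le> (radial_fun \<Omega> (v$2))^2 / 2"
    unfolding T_def by auto
  obtain R where R: "R \<ge> 0" "\<And>t. radial_fun \<Omega> t \<le> R" "\<And>x. x \<in> \<Omega> \<Longrightarrow> norm x \<le> R"
    using radial_fun_bound[OF cp st] by blast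
  have memT: "v \<in> T \<longleftrightarrow> v \<in> PP \<and> hpol v \<in> \<Omega>" for v
  proof (cases "v \<in> PP")
    case True
    then have v1: "0 < v$1" "0 \<le> v$2" "v$2 < 2*pi" by (auto simp: PP_def)
    have f0: "0 \<le> radial_fun \<Omega> (v$2)" by (rule radial_fun_props(1)[OF cp st])
    have "hpol v \<in> \<Omega> \<longleftrightarrow> sqrt (2 * v$1) \<le> radial_fun \<Omega> (v$2)"
      unfolding hpol_def using v1 by (intro mem_starshaped_iff[OF cp st]) auto
    also have "\<dots> \<longleftrightarrow> 2 * v$1 \<le> (radial_fun \<Omega> (v$2))^2"
      using v1 f0 by (simp add: real_sqrt_le_iff')
    finally show ?thesis using True unfolding T_def by auto
  next
    case False then show ?thesis unfolding T_def by auto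
  qed
  have Tset: "T = PP \<inter> hpol -` \<Omega>" using memT by auto
  have "hpol -` \<Omega> \<in> sets borel"
    using continuous_hpol compact_imp_closed[OF cp] by (intro borel_closed closed_vimage) auto
  then have Tm0: "T \<in> sets lebesgue" unfolding Tset using PP_borel by (intro borel_lebesgue) auto
  have "T \<subseteq> cbox (vector [0, 0]) (vector [R^2/2, 2*pi])"
  proof
    fix v assume v: "v \<in> T"
    then have "v$1 \<le> (radial_fun \<Omega> (v$2))^2 / 2" "v \<in> PP" unfolding T_def by auto
    moreover have "(radial_fun \<Omega> (v$2))^2 \<le> R^2"
      using R(2)[of "v$2"] radial_fun_props(1)[OF cp st, of "v$2"] by (intro power_mono) auto
    ultimately show "v \<in> cbox (vector [0, 0]) (vector [R^2/2, 2*pi])"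
      by (auto simp: mem_box_cart forall_2 PP_def)
  qed
  then have "bounded T" using bounded_cbox bounded_subset by blast
  then show Tm: "T \<in> lmeasurable" using Tm0 bounded_set_imp_lmeasurable by blast
  have img: "hpol ` T = \<Omega> - {0}"
  proof
    show "hpol ` T \<subseteq> \<Omega> - {0}"
    proof
      fix x assume "x \<in> hpol ` T"
      then obtain v where v: "v \<in> T" "x = hpol v" by auto
      then have "v \<in> PP" "hpol v \<in> \<Omega>" using memT by auto
      moreover have "norm (hpol v) > 0" using \<open>v \<in> PP\<close> by (simp add: norm_hpol PP_def)
      ultimately show "x \<in> \<Omega> - {0}" using v by auto
    qed
  next
    show "\<Omega> - {0} \<subseteq> hpol ` T"
    proof
      fix x assume x: "x \<in> \<Omega> - {0}"
      obtain t where t: "0 \<le> t" "t < 2*pi" "x = norm x *\<^sub>R dir t" by (rule polar_exists)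
      define v :: "real^2" where "v = vector [(norm x)^2 / 2, t]"
      have "norm x > 0" using x by auto
      then have vP: "v \<in> PP" using t by (simp add: v_def PP_def)
      have "hpol v = x" using t(3) \<open>norm x > 0\<close> by (simp add: hpol_def v_def)
      then show "x \<in> hpol ` T" using vP x memT by (metis DiffD1 image_eqI)
    qed
  qed
  have der: "\<And>v. v \<in> T \<Longrightarrow> (hpol has_derivative hpol' v) (at v within T)"
    by (rule has_derivative_hpol) (auto simp: T_def PP_def)
  have inj: "inj_on hpol T" using inj_hpol by (rule inj_on_subset) (auto simp: T_def)
  have "((\<lambda>x. \<bar>det (matrix (hpol' x))\<bar>) has_integral measure lebesgue T) T"
  proof -
    have "((\<lambda>x. 1::real) has_integral measure lebesgue T) T" by (rule has_integral_one_measure[OF Tm])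
    then show ?thesis
      by (rule has_integral_eq[rotated]) (auto simp: det_hpol' T_def PP_def)
  qed
  then have "hpol ` T \<in> lmeasurable \<and> measure lebesgue (hpol ` T) = measure lebesgue T"
    using has_measure_differentiable_image[OF Tm0 der inj] by blast
  then have "measure lebesgue (\<Omega> - {0}) = measure lebesgue T" using img by simp
  moreover have "measure lebesgue (\<Omega> - {0}) = measure lebesgue \<Omega>"
    by (rule measure_Diff_null_set)
      (use cp in \<open>auto simp: borel_lebesgue borel_compact negligible_iff_null_sets[symmetric]\<close>)
  ultimately show "measure lebesgue \<Omega> = measure lebesgue T" by simp
qed

lemma area_bound:
  assumes cp1: "compact \<Omega>1" and st1: "starshaped0 \<Omega>1"
    and cp2: "compact \<Omega>2" and st2: "starshaped0 \<Omega>2"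
    and M: "0 \<le> M" and e: "0 \<le> \<epsilon>"
    and b: "\<And>t. 0 \<le> t \<Longrightarrow> t < 2*pi \<Longrightarrow>
       radial_fun \<Omega>1 t \<le> M \<and> radial_fun \<Omega>2 t \<le> M \<and> \<bar>radial_fun \<Omega>1 t - radial_fun \<Omega>2 t\<bar> \<le> \<epsilon>"
  shows "measure lebesgue \<Omega>1 \<le> measure lebesgue \<Omega>2 + 2 * pi * M * \<epsilon>"
proof -
  let ?f1 = "radial_fun \<Omega>1" and ?f2 = "radial_fun \<Omega>2"
  define T1 where "T1 = {v \<in> PP. v$1 \<le> (?f1 (v$2))^2 / 2}"
  define T2 where "T2 = {v \<in> PP. v$1 \<le> (?f2 (v$2))^2 / 2}"
  have m1: "T1 \<in> lmeasurable" "measure lebesgue \<Omega>1 = measure lebesgue T1"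
    unfolding T1_def by (rule measure_starshaped[OF cp1 st1])+
  have m2: "T2 \<in> lmeasurable" "measure lebesgue \<Omega>2 = measure lebesgue T2"
    unfolding T2_def by (rule measure_starshaped[OF cp2 st2])+
  obtain R where R: "R \<ge> 0" "\<And>t. ?f1 t \<le> R" "\<And>x. x \<in> \<Omega>1 \<Longrightarrow> norm x \<le> R"
    by (rule radial_fun_bound[OF cp1 st1]) blast
  have "measure lebesgue T1 \<le> measure lebesgue T2 + (2*pi) * (M * \<epsilon>)"
  proof (rule strip_measure[where F = "\<lambda>t. (?f2 t)^2/2" and B = "R^2/2"])
    show "T1 \<in> sets lebesgue" using m1(1) by blast
    show "T2 \<in> lmeasurable" by (rule m2(1))
    show "0 \<le> M * \<epsilon>" using M e by simp
    show "0 \<le> R^2/2" by simp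
    show "0 \<le> 2*pi" by simp
    show "T1 \<subseteq> {v. 0 < v$1 \<and> v$1 \<le> R^2/2 \<and> 0 \<le> v$2 \<and> v$2 \<le> 2*pi}"
    proof
      fix v assume v: "v \<in> T1"
      have "(?f1 (v$2))^2 \<le> R^2"
        using R(2)[of "v$2"] radial_fun_props(1)[OF cp1 st1, of "v$2"] by (intro power_mono) auto
      then show "v \<in> {v. 0 < v$1 \<and> v$1 \<le> R^2/2 \<and> 0 \<le> v$2 \<and> v$2 \<le> 2*pi}"
        using v by (auto simp: T1_def PP_def)
    qed
    fix v assume v: "v \<in> T1 - T2"
    then have vP: "v \<in> PP" and le1: "v$1 \<le> (?f1 (v$2))^2 / 2" and gt2: "\<not> v$1 \<le> (?f2 (v$2))^2 / 2"
      by (auto simp: T1_def T2_def)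
    have t: "0 \<le> v$2" "v$2 < 2*pi" using vP by (auto simp: PP_def)
    have p1: "0 \<le> ?f1 (v$2)" by (rule radial_fun_props(1)[OF cp1 st1])
    have p2: "0 \<le> ?f2 (v$2)" by (rule radial_fun_props(1)[OF cp2 st2])
    have bb: "?f1 (v$2) \<le> M" "?f2 (v$2) \<le> M" "?f1 (v$2) - ?f2 (v$2) \<le> \<epsilon>"
      using b[OF t] by auto
    have "(?f1 (v$2))^2 - (?f2 (v$2))^2 = (?f1 (v$2) - ?f2 (v$2)) * (?f1 (v$2) + ?f2 (v$2))"
      by (simp add: power2_eq_square algebra_simps)
    also have "\<dots> \<le> \<epsilon> * (2 * M)"
    proof (cases "?f1 (v$2) - ?f2 (v$2) \<ge> 0")
      case True
      then show ?thesis using bb p1 p2 e by (intro mult_mono) auto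
    next
      case False
      then have "(?f1 (v$2) - ?f2 (v$2)) * (?f1 (v$2) + ?f2 (v$2)) \<le> 0"
        using p1 p2 by (intro mult_nonpos_nonneg) auto
      also have "0 \<le> \<epsilon> * (2 * M)" using e M by simp
      finally show ?thesis .
    qed
    finally have "(?f1 (v$2))^2 / 2 \<le> (?f2 (v$2))^2 / 2 + M * \<epsilon>" by (simp add: algebra_simps)
    then show "(?f2 (v$2))^2 / 2 < v$1 \<and> v$1 \<le> (?f2 (v$2))^2 / 2 + M * \<epsilon>"
      using le1 gt2 by linarith
  qed
  then show ?thesis using m1(2) m2(2) by (simp add: mult.assoc)
qed

lemma sup_norm_ge:
  assumes "\<And>t. 0 \<le> t \<Longrightarrow> t < 2*pi \<Longrightarrow> \<bar>f t\<bar> \<le> B" "0 \<le> t" "t < 2*pi"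
  shows "\<bar>f t\<bar> \<le> sup_norm f"
  unfolding sup_norm_def
  by (rule cSUP_upper) (use assms in \<open>auto intro!: bdd_aboveI[of _ B]\<close>)

lemma area_main:
  assumes cp1: "compact \<Omega>1" and st1: "starshaped0 \<Omega>1"
    and cp2: "compact \<Omega>2" and st2: "starshaped0 \<Omega>2"
  shows "\<bar>measure lebesgue \<Omega>1 - measure lebesgue \<Omega>2\<bar>
           \<le> 2 * pi * max (sup_norm (radial_fun \<Omega>1)) (sup_norm (radial_fun \<Omega>2))
               * sup_norm (\<lambda>\<theta>. radial_fun \<Omega>1 \<theta> - radial_fun \<Omega>2 \<theta>)"
proof -
  let ?f1 = "radial_fun \<Omega>1" and ?f2 = "radial_fun \<Omega>2"
  let ?M = "max (sup_norm ?f1) (sup_norm ?f2)"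
  let ?e = "sup_norm (\<lambda>\<theta>. ?f1 \<theta> - ?f2 \<theta>)"
  obtain R1 where R1: "R1 \<ge> 0" "\<And>t. ?f1 t \<le> R1" "\<And>x. x \<in> \<Omega>1 \<Longrightarrow> norm x \<le> R1"
    by (rule radial_fun_bound[OF cp1 st1]) blast
  obtain R2 where R2: "R2 \<ge> 0" "\<And>t. ?f2 t \<le> R2" "\<And>x. x \<in> \<Omega>2 \<Longrightarrow> norm x \<le> R2"
    by (rule radial_fun_bound[OF cp2 st2]) blast
  have a1: "\<bar>?f1 t\<bar> \<le> R1" for t using R1(2)[of t] radial_fun_props(1)[OF cp1 st1, of t] by simp
  have a2: "\<bar>?f2 t\<bar> \<le> R2" for t using R2(2)[of t] radial_fun_props(1)[OF cp2 st2, of t] by simp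
  have s1: "\<bar>?f1 t\<bar> \<le> sup_norm ?f1" if "0 \<le> t" "t < 2*pi" for t
    by (rule sup_norm_ge[OF _ that]) (rule a1)
  have s2: "\<bar>?f2 t\<bar> \<le> sup_norm ?f2" if "0 \<le> t" "t < 2*pi" for t
    by (rule sup_norm_ge[OF _ that]) (rule a2)
  have s3: "\<bar>?f1 t - ?f2 t\<bar> \<le> ?e" if "0 \<le> t" "t < 2*pi" for t
  proof (rule sup_norm_ge[OF _ that, where B = "R1 + R2"])
    fix t show "\<bar>?f1 t - ?f2 t\<bar> \<le> R1 + R2" using a1[of t] a2[of t] by linarith
  qed
  have M0: "0 \<le> ?M" using s1[of 0] by (simp add: le_max_iff_disj) (use abs_ge_zero order_trans in blast)
  have e0: "0 \<le> ?e" using s3[of 0] abs_ge_zero order_trans by fastforce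
  have b: "?f1 t \<le> ?M \<and> ?f2 t \<le> ?M \<and> \<bar>?f1 t - ?f2 t\<bar> \<le> ?e" if "0 \<le> t" "t < 2*pi" for t
    using s1[OF that] s2[OF that] s3[OF that] by (auto simp: le_max_iff_disj)
  have b': "?f2 t \<le> ?M \<and> ?f1 t \<le> ?M \<and> \<bar>?f2 t - ?f1 t\<bar> \<le> ?e" if "0 \<le> t" "t < 2*pi" for t
    using b[OF that] by (simp add: abs_minus_commute)
  have "measure lebesgue \<Omega>1 \<le> measure lebesgue \<Omega>2 + 2 * pi * ?M * ?e"
    by (rule area_bound[OF cp1 st1 cp2 st2 M0 e0 b])
  moreover have "measure lebesgue \<Omega>2 \<le> measure lebesgue \<Omega>1 + 2 * pi * ?M * ?e"
    by (rule area_bound[OF cp2 st2 cp1 st1 M0 e0 b'])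
  ultimately show ?thesis by linarith
qed

lemma borel_to_lebesgue: "f \<in> borel_measurable (borel::('a::euclidean_space) measure) \<Longrightarrow> f \<in> borel_measurable lebesgue"
  apply (rule measurable_completion)
  apply (subst measurable_lborel2)
  apply assumption
  done

lemma cont_lebesgue: "continuous_on UNIV (f::'a::euclidean_space \<Rightarrow> real) \<Longrightarrow> f \<in> borel_measurable lebesgue"
  by (rule borel_to_lebesgue, rule borel_measurable_continuous_onI)

lemma integral_lebesgue_scale:
  fixes f :: "real^2 \<Rightarrow> real" assumes f: "f \<in> borel_measurable lebesgue" and t: "t > 0"
  shows "integral\<^sup>L lebesgue (\<lambda>x. f (x /\<^sub>R t)) = t^2 * integral\<^sup>L lebesgue f"
proof -
  have T: "(\<lambda>x::real^2. 0 + (\<Sum>j\<in>Basis. ((1/t) * (x \<bullet> j)) *\<^sub>R j)) = (\<lambda>x. x /\<^sub>R t)"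
  proof
    fix x :: "real^2"
    have "(\<Sum>j\<in>Basis. ((1/t) * (x \<bullet> j)) *\<^sub>R j) = (1/t) *\<^sub>R (\<Sum>j\<in>Basis. (x \<bullet> j) *\<^sub>R j)"
      by (simp add: scaleR_sum_right)
    then show "0 + (\<Sum>j\<in>Basis. ((1/t) * (x \<bullet> j)) *\<^sub>R j) = x /\<^sub>R t"
      by (simp add: euclidean_representation divide_inverse_commute)
  qed
  have L: "lebesgue = density (distr lebesgue lebesgue (\<lambda>x::real^2. x /\<^sub>R t)) (\<lambda>_. (\<Prod>j\<in>(Basis::(real^2) set). \<bar>1/t\<bar>))"
  proof -
    have "lebesgue = density (distr lebesgue lebesgue (\<lambda>x::real^2. 0 + (\<Sum>j\<in>Basis. ((1/t) * (x \<bullet> j)) *\<^sub>R j))) (\<lambda>_. (\<Prod>j\<in>(Basis::(real^2) set). \<bar>1/t\<bar>))"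
      by (rule lebesgue_affine_euclidean) (use t in simp)
    then show ?thesis unfolding T .
  qed
  have Tm: "(\<lambda>x::real^2. x /\<^sub>R t) \<in> lebesgue \<rightarrow>\<^sub>M lebesgue"
  proof -
    have "(\<lambda>x::real^2. 0 + (\<Sum>j\<in>Basis. ((1/t) * (x \<bullet> j)) *\<^sub>R j)) \<in> lebesgue \<rightarrow>\<^sub>M lebesgue"
      by (rule lebesgue_affine_measurable) (use t in simp)
    then show ?thesis unfolding T .
  qed
  have P: "(\<Prod>j\<in>(Basis::(real^2) set). \<bar>1/t\<bar>) = (1/t)^2"
    using t by simp
  have "integral\<^sup>L lebesgue f = integral\<^sup>L (density (distr lebesgue lebesgue (\<lambda>x::real^2. x /\<^sub>R t)) (\<lambda>_. ennreal ((1/t)^2))) f"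
    by (subst L) (simp only: P)
  also have "\<dots> = integral\<^sup>L (distr lebesgue lebesgue (\<lambda>x::real^2. x /\<^sub>R t)) (\<lambda>x. (1/t)^2 *\<^sub>R f x)"
    by (rule integral_density) (use f in auto)
  also have "\<dots> = integral\<^sup>L lebesgue (\<lambda>x. (1/t)^2 *\<^sub>R f (x /\<^sub>R t))"
    by (rule integral_distr[OF Tm]) (use f in auto)
  also have "\<dots> = (1/t)^2 * integral\<^sup>L lebesgue (\<lambda>x. f (x /\<^sub>R t))"
    by simp
  finally show ?thesis using t by (simp add: field_simps)
qed

lemma test_field_deriv:
  assumes "test_field \<phi>"
  shows "(\<phi> has_derivative frechet_derivative \<phi> (at x)) (at x)" "linear (frechet_derivative \<phi> (at x))"
  using assms unfolding test_field_def
  by (auto simp: frechet_derivative_works[symmetric] intro: linear_frechet_derivative)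

lemma test_field_cont:
  assumes "test_field \<phi>"
  shows "continuous_on UNIV (\<lambda>x. frechet_derivative \<phi> (at x) (axis i 1) $ j)"
  using assms unfolding test_field_def by auto

lemma divergence_cont:
  assumes "test_field \<phi>"
  shows "continuous_on UNIV (divergence \<phi>)"
  unfolding divergence_def[abs_def] sum_2
  by (intro continuous_intros test_field_cont[OF assms])

lemma test_field_zero: "test_field (\<lambda>x. 0)"
  unfolding test_field_def
proof (intro conjI allI)
  show "(\<lambda>x. 0::real^2) differentiable at x" for x by simp
  have "frechet_derivative (\<lambda>x. 0::real^2) (at x) = (\<lambda>h. 0)" for x
    by (rule frechet_derivative_at[symmetric]) simp
  then show "continuous_on UNIV (\<lambda>x. frechet_derivative (\<lambda>x. 0::real^2) (at x) (axis i 1) $ j)" for i j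
    by simp
qed auto

lemma scale_deriv:
  assumes "test_field \<phi>" "t > 0"
  shows "((\<lambda>x. \<phi> (x /\<^sub>R t)) has_derivative (\<lambda>h. frechet_derivative \<phi> (at (x /\<^sub>R t)) h /\<^sub>R t)) (at x)"
proof -
  have l: "((\<lambda>x::real^2. x /\<^sub>R t) has_derivative (\<lambda>h. h /\<^sub>R t)) (at x)"
    by (intro derivative_eq_intros) auto
  have "((\<lambda>x. \<phi> (x /\<^sub>R t)) has_derivative (\<lambda>h. frechet_derivative \<phi> (at (x /\<^sub>R t)) (h /\<^sub>R t))) (at x)"
    using has_derivative_compose[OF l test_field_deriv(1)[OF assms(1)]] by (simp add: o_def)
  then show ?thesis
    using linear_cmul[OF test_field_deriv(2)[OF assms(1)]] by simp
qed

lemma scale_frechet: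
  assumes "test_field \<phi>" "t > 0"
  shows "frechet_derivative (\<lambda>x. \<phi> (x /\<^sub>R t)) (at x) = (\<lambda>h. frechet_derivative \<phi> (at (x /\<^sub>R t)) h /\<^sub>R t)"
  using frechet_derivative_at[OF scale_deriv[OF assms]] by simp

lemma test_field_scale:
  assumes tf: "test_field \<phi>" and t: "t > 0"
  shows "test_field (\<lambda>x. \<phi> (x /\<^sub>R t))"
    "divergence (\<lambda>x. \<phi> (x /\<^sub>R t)) x = divergence \<phi> (x /\<^sub>R t) / t"
proof -
  show "divergence (\<lambda>x. \<phi> (x /\<^sub>R t)) x = divergence \<phi> (x /\<^sub>R t) / t"
    unfolding divergence_def scale_frechet[OF assms] sum_2 by (simp add: divide_inverse_commute distrib_left)
  have supp: "{x. \<phi> (x /\<^sub>R t) \<noteq> 0} = (*\<^sub>R) t ` {y. \<phi> y \<noteq> 0}"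
  proof
    show "{x. \<phi> (x /\<^sub>R t) \<noteq> 0} \<subseteq> (*\<^sub>R) t ` {y. \<phi> y \<noteq> 0}"
    proof
      fix x assume "x \<in> {x. \<phi> (x /\<^sub>R t) \<noteq> 0}"
      moreover have "x = t *\<^sub>R (x /\<^sub>R t)" using t by simp
      ultimately show "x \<in> (*\<^sub>R) t ` {y. \<phi> y \<noteq> 0}" by blast
    qed
  next
    show "(*\<^sub>R) t ` {y. \<phi> y \<noteq> 0} \<subseteq> {x. \<phi> (x /\<^sub>R t) \<noteq> 0}"
      using t by auto
  qed
  have cpt: "compact (closure {y. \<phi> y \<noteq> 0})" using tf unfolding test_field_def by blast
  show "test_field (\<lambda>x. \<phi> (x /\<^sub>R t))"
    unfolding test_field_def
  proof (intro conjI allI)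
    show "(\<lambda>x. \<phi> (x /\<^sub>R t)) differentiable at x" for x
      using scale_deriv[OF assms] unfolding differentiable_def by blast
    fix i j
    have c1: "continuous_on UNIV (\<lambda>x::real^2. x /\<^sub>R t)" by (intro continuous_intros)
    have c2: "continuous_on UNIV (\<lambda>y. frechet_derivative \<phi> (at y) (axis i 1) $ j / t)"
      by (intro continuous_on_divide test_field_cont[OF tf] continuous_on_const) (use t in auto)
    have "continuous_on UNIV ((\<lambda>y. frechet_derivative \<phi> (at y) (axis i 1) $ j / t) \<circ> (\<lambda>x. x /\<^sub>R t))"
      by (rule continuous_on_compose[OF c1 continuous_on_subset[OF c2]]) auto
    then show "continuous_on UNIV (\<lambda>x. frechet_derivative (\<lambda>x. \<phi> (x /\<^sub>R t)) (at x) (axis i 1) $ j)"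
      unfolding scale_frechet[OF assms] by (simp add: o_def divide_inverse_commute)
  next
    show "compact (closure {x. \<phi> (x /\<^sub>R t) \<noteq> 0})"
      unfolding supp closure_scaleR[symmetric] by (rule compact_scaling[OF cpt])
  next
    show "norm (\<phi> (x /\<^sub>R t)) \<le> 1" for x using tf unfolding test_field_def by blast
  qed
qed

lemma indicator_scale:
  fixes E :: "(real^2) set"
  assumes "t > 0"
  shows "indicator ((*\<^sub>R) t ` E) x = (indicator E (x /\<^sub>R t) :: real)"
proof -
  have "x \<in> (*\<^sub>R) t ` E \<longleftrightarrow> x /\<^sub>R t \<in> E"
  proof
    assume "x \<in> (*\<^sub>R) t ` E"
    then obtain y where "y \<in> E" "x = t *\<^sub>R y" by auto
    moreover have "(t *\<^sub>R y) /\<^sub>R t = y" using assms by simp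
    ultimately show "x /\<^sub>R t \<in> E" by simp
  next
    assume "x /\<^sub>R t \<in> E"
    moreover have "x = t *\<^sub>R (x /\<^sub>R t)" using assms by simp
    ultimately show "x \<in> (*\<^sub>R) t ` E" by blast
  qed
  then show ?thesis by (simp add: indicator_def)
qed

lemma perimeter_scale:
  assumes E: "E \<in> sets lebesgue" and t: "t > 0"
  shows "ereal t * perimeter E \<le> perimeter ((*\<^sub>R) t ` E)"
proof -
  have "perimeter E \<le> perimeter ((*\<^sub>R) t ` E) / ereal t"
    unfolding perimeter_def[of E]
  proof (rule SUP_least)
    fix \<phi> assume "\<phi> \<in> {\<phi>. test_field \<phi>}"
    then have tf: "test_field \<phi>" by simp
    let ?\<psi> = "\<lambda>x. \<phi> (x /\<^sub>R t)"
    define g where "g y = indicator E y * divergence \<phi> y / t" for y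
    have gm: "g \<in> borel_measurable lebesgue"
      unfolding g_def using E cont_lebesgue[OF divergence_cont[OF tf]] by measurable
    have "integral\<^sup>L lebesgue (\<lambda>x. indicator ((*\<^sub>R) t ` E) x * divergence ?\<psi> x)
        = integral\<^sup>L lebesgue (\<lambda>x. g (x /\<^sub>R t))"
      unfolding g_def by (simp add: indicator_scale[OF t] test_field_scale(2)[OF tf t])
    also have "\<dots> = t^2 * integral\<^sup>L lebesgue g" by (rule integral_lebesgue_scale[OF gm t])
    also have "\<dots> = t * integral\<^sup>L lebesgue (\<lambda>x. indicator E x * divergence \<phi> x)"
      unfolding g_def using t by (simp add: power2_eq_square)
    finally have eq: "integral\<^sup>L lebesgue (\<lambda>x. indicator ((*\<^sub>R) t ` E) x * divergence ?\<psi> x)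
        = t * integral\<^sup>L lebesgue (\<lambda>x. indicator E x * divergence \<phi> x)" .
    have "ereal (integral\<^sup>L lebesgue (\<lambda>x. indicator ((*\<^sub>R) t ` E) x * divergence ?\<psi> x))
       \<le> perimeter ((*\<^sub>R) t ` E)"
      unfolding perimeter_def by (rule SUP_upper) (use test_field_scale(1)[OF tf t] in simp)
    then have "ereal t * ereal (integral\<^sup>L lebesgue (\<lambda>x. indicator E x * divergence \<phi> x)) \<le> perimeter ((*\<^sub>R) t ` E)"
      using eq by simp
    then show "ereal (integral\<^sup>L lebesgue (\<lambda>x. indicator E x * divergence \<phi> x)) \<le> perimeter ((*\<^sub>R) t ` E) / ereal t"
      using t by (subst ereal_le_divide_pos) auto
  qed
  then show ?thesis using t by (subst (asm) ereal_le_divide_pos) auto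
qed

lemma perimeter_nonneg: "0 \<le> perimeter E"
proof -
  have "ereal (integral\<^sup>L lebesgue (\<lambda>x. indicator E x * divergence (\<lambda>x. 0) x)) \<le> perimeter E"
    unfolding perimeter_def by (rule SUP_upper) (simp add: test_field_zero)
  moreover have "divergence (\<lambda>x. 0::real^2) x = 0" for x
  proof -
    have "frechet_derivative (\<lambda>x. 0::real^2) (at x) = (\<lambda>h. 0)"
      by (rule frechet_derivative_at[symmetric]) simp
    then show ?thesis by (simp add: divergence_def)
  qed
  ultimately show ?thesis by (simp add: zero_ereal_def)
qed

definition Dc :: "(real^2 \<Rightarrow> real^2) \<Rightarrow> real^2 \<Rightarrow> 2 \<Rightarrow> 2 \<Rightarrow> real" where
  "Dc \<phi> x i j = frechet_derivative \<phi> (at x) (axis j 1) $ i"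

lemma D_lin:
  assumes "test_field \<phi>"
  shows "frechet_derivative \<phi> (at x) (a *\<^sub>R axis 1 1 + b *\<^sub>R axis 2 1) $ i = a * Dc \<phi> x i 1 + b * Dc \<phi> x i 2"
  using test_field_deriv(2)[OF assms, of x]
  by (simp add: linear_add linear_cmul Dc_def)

lemma divergence_Dc: "divergence \<phi> x = Dc \<phi> x 1 1 + Dc \<phi> x 2 2"
  by (simp add: divergence_def Dc_def sum_2)

definition Pt :: "real \<Rightarrow> real \<Rightarrow> real^2" where "Pt \<rho> \<theta> = \<rho> *\<^sub>R dir \<theta>"

definition Af where "Af \<phi> \<rho> \<theta> = \<rho> * ((\<phi> (Pt \<rho> \<theta>))$1 * cos \<theta> + (\<phi> (Pt \<rho> \<theta>))$2 * sin \<theta>)"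
definition Bf where "Bf \<phi> \<rho> \<theta> = (\<phi> (Pt \<rho> \<theta>))$2 * cos \<theta> - (\<phi> (Pt \<rho> \<theta>))$1 * sin \<theta>"
definition gA where "gA \<phi> \<rho> \<theta> =
  ((\<phi> (Pt \<rho> \<theta>))$1 * cos \<theta> + (\<phi> (Pt \<rho> \<theta>))$2 * sin \<theta>)
  + \<rho> * ((cos \<theta> * Dc \<phi> (Pt \<rho> \<theta>) 1 1 + sin \<theta> * Dc \<phi> (Pt \<rho> \<theta>) 1 2) * cos \<theta>
         + (cos \<theta> * Dc \<phi> (Pt \<rho> \<theta>) 2 1 + sin \<theta> * Dc \<phi> (Pt \<rho> \<theta>) 2 2) * sin \<theta>)"
definition gB where "gB \<phi> \<rho> \<theta> =
  (- \<rho> * sin \<theta> * Dc \<phi> (Pt \<rho> \<theta>) 2 1 + \<rho> * cos \<theta> * Dc \<phi> (Pt \<rho> \<theta>) 2 2) * cos \<theta>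
  - (\<phi> (Pt \<rho> \<theta>))$2 * sin \<theta>
  - ((- \<rho> * sin \<theta> * Dc \<phi> (Pt \<rho> \<theta>) 1 1 + \<rho> * cos \<theta> * Dc \<phi> (Pt \<rho> \<theta>) 1 2) * sin \<theta>
     + (\<phi> (Pt \<rho> \<theta>))$1 * cos \<theta>)"

lemma gA_gB: "gA \<phi> \<rho> \<theta> + gB \<phi> \<rho> \<theta> = \<rho> * divergence \<phi> (Pt \<rho> \<theta>)"
proof -
  let ?a = "Dc \<phi> (Pt \<rho> \<theta>) 1 1" and ?b = "Dc \<phi> (Pt \<rho> \<theta>) 2 2"
  have c1: "\<rho> * (cos \<theta> * (cos \<theta> * a)) + \<rho> * (sin \<theta> * (sin \<theta> * a)) = \<rho> * a" for a
  proof -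
    have "\<rho> * (cos \<theta> * (cos \<theta> * a)) + \<rho> * (sin \<theta> * (sin \<theta> * a))
       = (\<rho> * a) * (cos \<theta> * cos \<theta>) + (\<rho> * a) * (sin \<theta> * sin \<theta>)" by (simp add: algebra_simps)
    also have "\<dots> = \<rho> * a" by (rule cs_aux)
    finally show ?thesis .
  qed
  have "gA \<phi> \<rho> \<theta> + gB \<phi> \<rho> \<theta> = \<rho> * (cos \<theta> * (cos \<theta> * ?a)) + \<rho> * (sin \<theta> * (sin \<theta> * ?a))
      + (\<rho> * (cos \<theta> * (cos \<theta> * ?b)) + \<rho> * (sin \<theta> * (sin \<theta> * ?b)))"
    unfolding gA_def gB_def by (simp add: algebra_simps)
  also have "\<dots> = \<rho> * (?a + ?b)" by (simp only: c1) (simp add: algebra_simps)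
  finally show ?thesis by (simp add: divergence_Dc)
qed

lemma phi_rho_deriv:
  assumes tf: "test_field \<phi>"
  shows "((\<lambda>\<rho>. \<phi> (Pt \<rho> \<theta>)) has_derivative (\<lambda>h. h *\<^sub>R frechet_derivative \<phi> (at (Pt \<rho> \<theta>)) (dir \<theta>))) (at \<rho> within X)"
proof -
  have l: "((\<lambda>\<rho>. \<rho> *\<^sub>R dir \<theta>) has_derivative (\<lambda>h. h *\<^sub>R dir \<theta>)) (at \<rho> within X)"
    by (intro derivative_eq_intros) auto
  have "((\<lambda>\<rho>. \<phi> (\<rho> *\<^sub>R dir \<theta>)) has_derivative (\<lambda>h. frechet_derivative \<phi> (at (\<rho> *\<^sub>R dir \<theta>)) (h *\<^sub>R dir \<theta>))) (at \<rho> within X)"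
    using has_derivative_compose[OF l has_derivative_at_withinI[OF test_field_deriv(1)[OF tf]]]
    by (simp add: o_def)
  then show ?thesis
    using linear_cmul[OF test_field_deriv(2)[OF tf]] by (simp add: Pt_def)
qed

lemma phi_theta_deriv:
  assumes tf: "test_field \<phi>"
  shows "((\<lambda>\<theta>. \<phi> (Pt \<rho> \<theta>)) has_derivative (\<lambda>h. h *\<^sub>R frechet_derivative \<phi> (at (Pt \<rho> \<theta>)) (\<rho> *\<^sub>R ndir \<theta>))) (at \<theta> within X)"
proof -
  have l: "((\<lambda>\<theta>. \<rho> *\<^sub>R dir \<theta>) has_derivative (\<lambda>h. h *\<^sub>R (\<rho> *\<^sub>R ndir \<theta>))) (at \<theta> within X)"
    using has_derivative_scaleR_right[OF has_derivative_dir[of \<theta> X], of \<rho>]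
    by (simp add: scaleR_left_commute mult.commute)
  have "((\<lambda>\<theta>. \<phi> (\<rho> *\<^sub>R dir \<theta>)) has_derivative (\<lambda>h. frechet_derivative \<phi> (at (\<rho> *\<^sub>R dir \<theta>)) (h *\<^sub>R (\<rho> *\<^sub>R ndir \<theta>)))) (at \<theta> within X)"
    using has_derivative_compose[OF l has_derivative_at_withinI[OF test_field_deriv(1)[OF tf]]]
    by (simp add: o_def)
  then show ?thesis
    using linear_cmul[OF test_field_deriv(2)[OF tf]] by (simp add: Pt_def)
qed

lemma has_derivative_nth':
  "(f has_derivative f') F \<Longrightarrow> ((\<lambda>x. f x $ i) has_derivative (\<lambda>h. f' h $ i)) F"
  by (rule bounded_linear.has_derivative[OF bounded_linear_vec_nth])

lemma Af_deriv:
  assumes tf: "test_field \<phi>"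
  shows "((\<lambda>\<rho>. Af \<phi> \<rho> \<theta>) has_real_derivative gA \<phi> \<rho> \<theta>) (at \<rho> within X)"
proof -
  note d = phi_rho_deriv[OF tf, of \<theta> \<rho> X]
  have "((\<lambda>\<rho>. \<rho> * ((\<phi> (Pt \<rho> \<theta>))$1 * cos \<theta> + (\<phi> (Pt \<rho> \<theta>))$2 * sin \<theta>)) has_derivative
     (\<lambda>h. \<rho> * ((h *\<^sub>R frechet_derivative \<phi> (at (Pt \<rho> \<theta>)) (dir \<theta>))$1 * cos \<theta> +
               (h *\<^sub>R frechet_derivative \<phi> (at (Pt \<rho> \<theta>)) (dir \<theta>))$2 * sin \<theta>)
          + h * ((\<phi> (Pt \<rho> \<theta>))$1 * cos \<theta> + (\<phi> (Pt \<rho> \<theta>))$2 * sin \<theta>))) (at \<rho> within X)"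
    by (intro has_derivative_mult has_derivative_ident has_derivative_add
        has_derivative_mult_left has_derivative_nth'[OF d])
  then have "((\<lambda>\<rho>. Af \<phi> \<rho> \<theta>) has_derivative (\<lambda>h. gA \<phi> \<rho> \<theta> * h)) (at \<rho> within X)"
    unfolding Af_def[abs_def]
    by (rule has_derivative_eq_rhs)
       (simp add: fun_eq_iff gA_def dir_alt D_lin[OF tf] algebra_simps)
  then show ?thesis by (simp add: has_field_derivative_def)
qed

lemma Bf_deriv:
  assumes tf: "test_field \<phi>"
  shows "((\<lambda>\<theta>. Bf \<phi> \<rho> \<theta>) has_real_derivative gB \<phi> \<rho> \<theta>) (at \<theta> within X)"
proof -
  note d = phi_theta_deriv[OF tf, of \<rho> \<theta> X]
  have "((\<lambda>\<theta>. (\<phi> (Pt \<rho> \<theta>))$2 * cos \<theta> - (\<phi> (Pt \<rho> \<theta>))$1 * sin \<theta>) has_derivative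
     (\<lambda>h. ((\<phi> (Pt \<rho> \<theta>))$2 * (h * - sin \<theta>) + (h *\<^sub>R frechet_derivative \<phi> (at (Pt \<rho> \<theta>)) (\<rho> *\<^sub>R ndir \<theta>))$2 * cos \<theta>)
        - ((\<phi> (Pt \<rho> \<theta>))$1 * (h * cos \<theta>) + (h *\<^sub>R frechet_derivative \<phi> (at (Pt \<rho> \<theta>)) (\<rho> *\<^sub>R ndir \<theta>))$1 * sin \<theta>))) (at \<theta> within X)"
    by (intro has_derivative_diff has_derivative_mult has_derivative_nth'[OF d]
        has_derivative_cos has_derivative_sin has_derivative_ident)
  then have "((\<lambda>\<theta>. Bf \<phi> \<rho> \<theta>) has_derivative (\<lambda>h. gB \<phi> \<rho> \<theta> * h)) (at \<theta> within X)"
    unfolding Bf_def[abs_def]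
  proof (rule has_derivative_eq_rhs)
    have n: "\<rho> *\<^sub>R ndir \<theta> = (- \<rho> * sin \<theta>) *\<^sub>R axis 1 1 + (\<rho> * cos \<theta>) *\<^sub>R axis 2 1"
      by (simp add: ndir_alt algebra_simps)
    show "(\<lambda>h. ((\<phi> (Pt \<rho> \<theta>))$2 * (h * - sin \<theta>) + (h *\<^sub>R frechet_derivative \<phi> (at (Pt \<rho> \<theta>)) (\<rho> *\<^sub>R ndir \<theta>))$2 * cos \<theta>)
        - ((\<phi> (Pt \<rho> \<theta>))$1 * (h * cos \<theta>) + (h *\<^sub>R frechet_derivative \<phi> (at (Pt \<rho> \<theta>)) (\<rho> *\<^sub>R ndir \<theta>))$1 * sin \<theta>))
        = (\<lambda>h. gB \<phi> \<rho> \<theta> * h)"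
      unfolding n vector_scaleR_component D_lin[OF tf] by (simp add: fun_eq_iff gB_def algebra_simps)
  qed
  then show ?thesis by (simp add: has_field_derivative_def)
qed

lemma cont_phi: "test_field \<phi> \<Longrightarrow> continuous_on UNIV \<phi>"
  by (rule differentiable_imp_continuous_on) (auto simp: test_field_def differentiable_on_def
      intro: differentiable_at_withinI)

lemma cont_Pt: "continuous_on UNIV (\<lambda>z::real\<times>real. Pt (fst z) (snd z))"
  unfolding Pt_def dir_alt by (intro continuous_intros)

lemma cont_Dc: "test_field \<phi> \<Longrightarrow> continuous_on UNIV (\<lambda>x. Dc \<phi> x i j)"
  unfolding Dc_def by (rule test_field_cont)

lemma cont_comp:
  assumes tf: "test_field \<phi>"
  shows "continuous_on UNIV (\<lambda>z::real\<times>real. Dc \<phi> (Pt (fst z) (snd z)) i j)"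
    "continuous_on UNIV (\<lambda>z::real\<times>real. \<phi> (Pt (fst z) (snd z)) $ i)"
proof -
  show "continuous_on UNIV (\<lambda>z::real\<times>real. Dc \<phi> (Pt (fst z) (snd z)) i j)"
    using continuous_on_compose2[OF cont_Dc[OF tf] cont_Pt] by simp
  have "continuous_on UNIV (\<lambda>z::real\<times>real. \<phi> (Pt (fst z) (snd z)))"
    using continuous_on_compose2[OF cont_phi[OF tf] cont_Pt] by simp
  then show "continuous_on UNIV (\<lambda>z::real\<times>real. \<phi> (Pt (fst z) (snd z)) $ i)"
    by (intro continuous_intros)
qed

lemma cont_gA: "test_field \<phi> \<Longrightarrow> continuous_on UNIV (\<lambda>z::real\<times>real. gA \<phi> (fst z) (snd z))"
  unfolding gA_def by (intro continuous_intros cont_comp)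

lemma cont_gB: "test_field \<phi> \<Longrightarrow> continuous_on UNIV (\<lambda>z::real\<times>real. gB \<phi> (fst z) (snd z))"
  unfolding gB_def by (intro continuous_intros cont_comp)

lemma Af_zero: "Af \<phi> 0 \<theta> = 0" by (simp add: Af_def)

lemma Af_le:
  assumes tf: "test_field \<phi>" and r: "r \<ge> 0"
  shows "Af \<phi> r \<theta> \<le> r"
proof -
  have "(\<phi> (Pt r \<theta>))$1 * cos \<theta> + (\<phi> (Pt r \<theta>))$2 * sin \<theta> = \<phi> (Pt r \<theta>) \<bullet> dir \<theta>"
    by (simp add: inner_vec_def sum_2)
  also have "\<dots> \<le> norm (\<phi> (Pt r \<theta>)) * norm (dir \<theta>)" by (rule norm_cauchy_schwarz)
  also have "\<dots> \<le> 1" using tf unfolding test_field_def by simp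
  finally have "(\<phi> (Pt r \<theta>))$1 * cos \<theta> + (\<phi> (Pt r \<theta>))$2 * sin \<theta> \<le> 1" .
  then show ?thesis unfolding Af_def using r by (metis mult_left_mono mult.right_neutral)
qed

lemma Bf_periodic: "Bf \<phi> \<rho> (2*pi) = Bf \<phi> \<rho> 0"
  by (simp add: Bf_def Pt_def dir_def)

lemma box_integral:
  assumes tf: "test_field \<phi>" and r: "r > 0"
  shows "integral (cbox (0,0) (r, 2*pi)) (\<lambda>z. fst z * divergence \<phi> (Pt (fst z) (snd z))) \<le> 2*pi*r"
proof -
  let ?B = "cbox (0::real,0::real) (r, 2*pi)"
  have iA: "(\<lambda>z. gA \<phi> (fst z) (snd z)) integrable_on ?B"
    by (rule integrable_continuous, rule continuous_on_subset[OF cont_gA[OF tf]]) auto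
  have iB: "(\<lambda>z. gB \<phi> (fst z) (snd z)) integrable_on ?B"
    by (rule integrable_continuous, rule continuous_on_subset[OF cont_gB[OF tf]]) auto
  have "integral ?B (\<lambda>z. fst z * divergence \<phi> (Pt (fst z) (snd z)))
      = integral ?B (\<lambda>z. gA \<phi> (fst z) (snd z) + gB \<phi> (fst z) (snd z))"
    by (simp add: gA_gB)
  also have "\<dots> = integral ?B (\<lambda>z. gA \<phi> (fst z) (snd z)) + integral ?B (\<lambda>z. gB \<phi> (fst z) (snd z))"
    by (rule integral_add[OF iA iB])
  finally have split: "integral ?B (\<lambda>z. fst z * divergence \<phi> (Pt (fst z) (snd z)))
      = integral ?B (\<lambda>z. gA \<phi> (fst z) (snd z)) + integral ?B (\<lambda>z. gB \<phi> (fst z) (snd z))" .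
    have "integral ?B (\<lambda>z. gB \<phi> (fst z) (snd z))
      = integral (cbox 0 r) (\<lambda>x. integral (cbox 0 (2*pi)) (\<lambda>y. gB \<phi> (fst (x,y)) (snd (x,y))))"
    by (rule integral_prod_continuous, rule continuous_on_subset[OF cont_gB[OF tf]]) auto
  also have "\<dots> = integral {0..r} (\<lambda>x. 0)"
  proof (unfold box_real(2), rule integral_cong)
    fix x assume "x \<in> {0..r}"
    have "(gB \<phi> x has_integral (Bf \<phi> x (2*pi) - Bf \<phi> x 0)) {0..2*pi}"
      by (rule fundamental_theorem_of_calculus)
         (auto simp: has_real_derivative_iff_has_vector_derivative[symmetric] intro: Bf_deriv[OF tf])
    then have "integral {0..2*pi} (gB \<phi> x) = 0" using Bf_periodic by (simp add: integral_unique)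
    then show "integral {0..2*pi} (\<lambda>y. gB \<phi> (fst (x,y)) (snd (x,y))) = 0"
      by simp
  qed
  also have "\<dots> = 0" by simp
  finally have zB: "integral ?B (\<lambda>z. gB \<phi> (fst z) (snd z)) = 0" .
    have contA: "continuous_on (cbox (0,0) (r, 2*pi)) (\<lambda>(x,y). gA \<phi> x y)"
    using continuous_on_subset[OF cont_gA[OF tf]] by (simp add: case_prod_beta')
  have "integral ?B (\<lambda>z. gA \<phi> (fst z) (snd z))
      = integral (cbox 0 r) (\<lambda>x. integral (cbox 0 (2*pi)) (\<lambda>y. gA \<phi> (fst (x,y)) (snd (x,y))))"
    by (rule integral_prod_continuous, rule continuous_on_subset[OF cont_gA[OF tf]]) auto
  also have "\<dots> = integral (cbox 0 (2*pi)) (\<lambda>y. integral (cbox 0 r) (\<lambda>x. gA \<phi> x y))"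
    using integral_swap_continuous[OF contA] by simp
  also have "\<dots> = integral {0..2*pi} (\<lambda>y. Af \<phi> r y)"
  proof (unfold box_real(2), rule integral_cong)
    fix y assume "y \<in> {0..2*pi}"
    have "((\<lambda>x. gA \<phi> x y) has_integral (Af \<phi> r y - Af \<phi> 0 y)) {0..r}"
      using r by (intro fundamental_theorem_of_calculus)
         (auto simp: has_real_derivative_iff_has_vector_derivative[symmetric] intro: Af_deriv[OF tf])
    then show "integral {0..r} (\<lambda>x. gA \<phi> x y) = Af \<phi> r y" by (simp add: integral_unique Af_zero)
  qed
  also have "\<dots> \<le> integral {0..2*pi} (\<lambda>y. r)"
  proof (rule integral_le)
    have "continuous_on UNIV (\<lambda>y. Af \<phi> r y)"
    proof -
      have "continuous_on UNIV (\<lambda>y. (\<lambda>z. Af \<phi> (fst z) (snd z)) (r, y))"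
        unfolding Af_def by (intro continuous_intros cont_comp[OF tf, THEN continuous_on_compose2]) auto
      then show ?thesis by simp
    qed
    then have "continuous_on {0..2*pi} (\<lambda>y. Af \<phi> r y)"
      by (rule continuous_on_subset) simp
    then show "(\<lambda>y. Af \<phi> r y) integrable_on {0..2*pi}"
      by (rule integrable_continuous_real)
    show "(\<lambda>y. r) integrable_on {0..2*pi}" by (rule integrable_continuous_real) (rule continuous_on_const)
    fix y show "Af \<phi> r y \<le> r" using Af_le[OF tf] r by simp
  qed
  also have "\<dots> = 2*pi*r" by simp
  finally show ?thesis using split zB by simp
qed

definition v2 :: "real \<times> real \<Rightarrow> real^2" where "v2 z = vector [fst z, snd z]"
definition p2 :: "real^2 \<Rightarrow> real \<times> real" where "p2 x = (x$1, x$2)"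

lemma v2_nth [simp]: "v2 z $ 1 = fst z" "v2 z $ 2 = snd z" by (simp_all add: v2_def)
lemma p2_v2 [simp]: "p2 (v2 z) = z" by (simp add: p2_def)
lemma v2_p2 [simp]: "v2 (p2 x) = x" by (simp add: p2_def vec2_eq_iff)

lemma mem_cbox_pair: "(z::real\<times>real) \<in> cbox u v \<longleftrightarrow> fst u \<le> fst z \<and> fst z \<le> fst v \<and> snd u \<le> snd z \<and> snd z \<le> snd v"
  by (cases z; cases u; cases v) (simp add: cbox_Pair_eq)

lemma mem_cbox2: "(x::real^2) \<in> cbox a b \<longleftrightarrow> a$1 \<le> x$1 \<and> x$1 \<le> b$1 \<and> a$2 \<le> x$2 \<and> x$2 \<le> b$2"
  by (simp add: mem_box_cart forall_2)

lemma v2_image: "v2 ` cbox u v = cbox (v2 u) (v2 v)"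
proof (rule set_eqI)
  fix x :: "real^2"
  have "x \<in> v2 ` cbox u v \<longleftrightarrow> p2 x \<in> cbox u v"
    by (metis image_eqI p2_v2 v2_p2 image_iff)
  then show "x \<in> v2 ` cbox u v \<longleftrightarrow> x \<in> cbox (v2 u) (v2 v)"
    by (simp add: mem_cbox_pair mem_cbox2 p2_def)
qed

lemma p2_image: "p2 ` cbox a b = cbox (p2 a) (p2 b)"
proof (rule set_eqI)
  fix z :: "real \<times> real"
  have "z \<in> p2 ` cbox a b \<longleftrightarrow> v2 z \<in> cbox a b"
    by (metis image_eqI p2_v2 v2_p2 image_iff)
  then show "z \<in> p2 ` cbox a b \<longleftrightarrow> z \<in> cbox (p2 a) (p2 b)"
    by (simp add: mem_cbox_pair mem_cbox2 p2_def)
qed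

lemma content_v2: "measure lborel (cbox (v2 u) (v2 v)) = measure lborel (cbox u v)"
proof -
  obtain u1 u2 v1 v2' where uv: "u = (u1, u2)" "v = (v1, v2')" by (cases u; cases v) auto
  show ?thesis
  proof (cases "u1 \<le> v1 \<and> u2 \<le> v2'")
    case True
    then have "v2 u \<in> cbox (v2 u) (v2 v)" using uv by (simp add: mem_cbox2)
    then have ne: "cbox (v2 u) (v2 v) \<noteq> {}" by blast
    have "measure lborel (cbox (v2 u) (v2 v)) = (\<Prod>i\<in>UNIV. v2 v $ i - v2 u $ i)"
      by (rule content_cbox_cart[OF ne])
    also have "\<dots> = (v1 - u1) * (v2' - u2)" using uv by (simp add: UNIV_2)
    also have "\<dots> = measure lborel (cbox u v)" using True uv by (simp add: content_Pair box_real(2))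
    finally show ?thesis .
  next
    case False
    then have e: "cbox (v2 u) (v2 v) = {}" using uv by (auto simp: mem_cbox2)
    have "measure lborel (cbox u v) = 0" using False uv by (auto simp: content_Pair box_real(2))
    then show ?thesis using e by simp
  qed
qed

lemma twiddle2:
  fixes F :: "real^2 \<Rightarrow> real"
  assumes "F integrable_on cbox a b"
  shows "integral (cbox a b) F = integral (cbox (p2 a) (p2 b)) (\<lambda>z. F (v2 z))"
proof -
  have "((\<lambda>z. F (v2 z)) has_integral (1 / 1) *\<^sub>R integral (cbox a b) F) (p2 ` cbox a b)"
  proof (rule has_integral_twiddle[where g = v2 and h = p2 and r = 1])
    have alt: "v2 = (\<lambda>z. fst z *\<^sub>R axis 1 1 + snd z *\<^sub>R axis 2 1)"
      by (simp add: fun_eq_iff vec2_eq_iff axis_def)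
    show "\<And>x. continuous (at x) v2"
      unfolding alt by (intro continuous_intros)
    show "\<And>u v. \<exists>w z. p2 ` cbox u v = cbox w z" using p2_image by blast
    show "\<And>u v. \<exists>w z. v2 ` cbox u v = cbox w z" using v2_image by blast
  qed (use assms v2_image content_v2 in auto)
  then show ?thesis by (simp add: p2_image integral_unique)
qed

lemma neg_line2: "negligible {v::real^2. v$2 = c}"
proof -
  have "negligible {x::real^2. x \<bullet> axis 2 1 = c}"
    by (rule negligible_standard_hyperplane) (simp add: axis_in_Basis_iff)
  then show ?thesis by (simp add: cart_eq_inner_axis)
qed

lemma neg_line1: "negligible {v::real^2. v$1 = 0}"
  by (rule negligible_standard_hyperplane_cart)

definition SS :: "real \<Rightarrow> (real^2) set" where
  "SS r = {v. 0 < v$1 \<and> v$1 \<le> r \<and> 0 \<le> v$2 \<and> v$2 < 2*pi}"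

lemma SS_borel: "SS r \<in> sets borel"
  unfolding SS_def by measurable

lemma norm_pol: "0 \<le> v$1 \<Longrightarrow> norm (pol v) = v$1"
  by (simp add: pol_def)

lemma inj_pol: "inj_on pol (SS r)"
proof
  fix v w assume v: "v \<in> SS r" and w: "w \<in> SS r" and eq: "pol v = pol w"
  have 1: "v$1 = w$1"
    using arg_cong[OF eq, of norm] v w by (simp add: norm_pol SS_def)
  have "v$1 > 0" using v by (simp add: SS_def)
  then have "dir (v$2) = dir (w$2)" using eq 1 by (simp add: pol_def)
  then have "v$2 = w$2" using v w by (intro dir_inj) (auto simp: SS_def)
  then show "v = w" using 1 by (simp add: vec2_eq_iff)
qed

lemma pol_image: "r > 0 \<Longrightarrow> pol ` SS r = cball 0 r - {0}"
proof
  assume r: "r > 0"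
  show "pol ` SS r \<subseteq> cball 0 r - {0}"
  proof
    fix x assume "x \<in> pol ` SS r"
    then obtain v where v: "v \<in> SS r" "x = pol v" by auto
    then have "norm x = v$1" by (simp add: norm_pol SS_def)
    then show "x \<in> cball 0 r - {0}" using v(1) by (auto simp: SS_def)
  qed
  show "cball 0 r - {0} \<subseteq> pol ` SS r"
  proof
    fix x :: "real^2" assume x: "x \<in> cball 0 r - {0}"
    obtain t where t: "0 \<le> t" "t < 2*pi" "x = norm x *\<^sub>R dir t" by (rule polar_exists)
    define v :: "real^2" where "v = vector [norm x, t]"
    have "v \<in> SS r" using x t by (simp add: v_def SS_def)
    moreover have "pol v = x" using t(3) by (simp add: pol_def v_def)
    ultimately show "x \<in> pol ` SS r" by blast
  qed
qed

lemma disc_integral: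
  assumes tf: "test_field \<phi>" and r: "r > 0"
  shows "integral\<^sup>L lebesgue (\<lambda>x. indicator (cball 0 r) x * divergence \<phi> x) \<le> 2*pi*r"
proof -
  let ?d = "divergence \<phi>"
  let ?C = "cball (0::real^2) r"
  let ?K = "cbox (vector [-r, -r]) (vector [r, r]) :: (real^2) set"
  have cd: "continuous_on UNIV ?d" by (rule divergence_cont[OF tf])
  have dK: "?d absolutely_integrable_on ?K"
    by (rule absolutely_integrable_continuous, rule continuous_on_subset[OF cd]) auto
  have CK: "?C \<subseteq> ?K"
  proof
    fix x :: "real^2" assume "x \<in> ?C"
    then have "norm x \<le> r" by simp
    moreover have "\<bar>x$1\<bar> \<le> norm x" "\<bar>x$2\<bar> \<le> norm x" by (simp_all add: component_le_norm_cart)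
    ultimately show "x \<in> ?K" by (simp add: mem_cbox2) linarith
  qed
  have Cm: "?C \<in> sets lebesgue" by (simp add: borel_lebesgue)
  have dC: "?d absolutely_integrable_on ?C"
    by (rule set_integrable_subset[OF dK Cm CK])
  have step1: "integral\<^sup>L lebesgue (\<lambda>x. indicator ?C x * ?d x) = integral ?C ?d"
    using set_lebesgue_integral_eq_integral(2)[OF dC] by (simp add: set_lebesgue_integral_def)
  have step2: "integral ?C ?d = integral (pol ` SS r) ?d"
    unfolding pol_image[OF r]
    by (rule integral_spike_set) (auto intro: negligible_subset[OF negligible_sing[of 0]])
  have Sm: "SS r \<in> sets lebesgue" using SS_borel by (rule borel_lebesgue)
  have der: "\<And>v. v \<in> SS r \<Longrightarrow> (pol has_derivative pol' v) (at v within SS r)"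
    by (rule has_derivative_pol)
  have dpol: "?d absolutely_integrable_on pol ` SS r"
    unfolding pol_image[OF r]
    by (rule set_integrable_subset[OF dC]) (use Cm in auto)
  have vdpol: "(\<lambda>x. vec (?d x) :: real^1) absolutely_integrable_on pol ` SS r"
    using dpol by (subst absolutely_integrable_on_1_iff) simp
  have cov: "integral (SS r) (\<lambda>v. \<bar>det (matrix (pol' v))\<bar> *\<^sub>R (vec (?d (pol v)) :: real^1))
      = integral (pol ` SS r) (\<lambda>x. vec (?d x))"
    using has_absolute_integral_change_of_variables[OF Sm der inj_pol, of "\<lambda>x. vec (?d x)" "integral (pol ` SS r) (\<lambda>x. vec (?d x))"] vdpol
    by blast
  have step3: "integral (SS r) (\<lambda>v. v$1 * ?d (pol v)) = integral (pol ` SS r) ?d"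
  proof -
    have "vec (integral (SS r) (\<lambda>v. \<bar>det (matrix (pol' v))\<bar> * ?d (pol v))) = (vec (integral (pol ` SS r) ?d) :: real^1)"
      using cov by (simp add: integral_on_1_eq[of "SS r"] integral_on_1_eq[of "pol ` SS r"])
    then have "integral (SS r) (\<lambda>v. \<bar>det (matrix (pol' v))\<bar> * ?d (pol v)) = integral (pol ` SS r) ?d"
      by (simp add: vec_eq_iff)
    moreover have "integral (SS r) (\<lambda>v. \<bar>det (matrix (pol' v))\<bar> * ?d (pol v)) = integral (SS r) (\<lambda>v. v$1 * ?d (pol v))"
      by (rule integral_cong) (simp add: det_pol' SS_def)
    ultimately show ?thesis by simp
  qed
  let ?K2 = "cbox (vector [0, 0]) (vector [r, 2*pi]) :: (real^2) set"
  have step4: "integral (SS r) (\<lambda>v. v$1 * ?d (pol v)) = integral ?K2 (\<lambda>v. v$1 * ?d (pol v))"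
  proof (rule integral_spike_set)
    have e: "{x \<in> SS r - ?K2. x$1 * ?d (pol x) \<noteq> 0} = {}" by (auto simp: SS_def mem_cbox2)
    show "negligible {x \<in> SS r - ?K2. x$1 * ?d (pol x) \<noteq> 0}" unfolding e by (rule negligible_empty)
    have "{x \<in> ?K2 - SS r. x$1 * ?d (pol x) \<noteq> 0} \<subseteq> {v. v$1 = 0} \<union> {v. v$2 = 2*pi}"
      by (auto simp: SS_def mem_cbox2)
    then show "negligible {x \<in> ?K2 - SS r. x$1 * ?d (pol x) \<noteq> 0}"
      by (rule negligible_subset[rotated]) (intro negligible_Un neg_line1 neg_line2)
  qed
  have cpol: "continuous_on UNIV pol"
    unfolding pol_def[abs_def] dir_alt by (intro continuous_intros)
  have cF: "continuous_on UNIV (\<lambda>v. v$1 * ?d (pol v))"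
    by (intro continuous_intros continuous_on_compose2[OF cd cpol]) auto
  have step5: "integral ?K2 (\<lambda>v. v$1 * ?d (pol v))
     = integral (cbox (0,0) (r, 2*pi)) (\<lambda>z. fst z * divergence \<phi> (Pt (fst z) (snd z)))"
  proof -
    have "(\<lambda>v. v$1 * ?d (pol v)) integrable_on ?K2"
      by (rule integrable_continuous, rule continuous_on_subset[OF cF]) auto
    then have "integral ?K2 (\<lambda>v. v$1 * ?d (pol v)) = integral (cbox (p2 (vector [0, 0])) (p2 (vector [r, 2*pi]))) (\<lambda>z. (v2 z)$1 * ?d (pol (v2 z)))"
      by (rule twiddle2)
    moreover have "pol (v2 z) = Pt (fst z) (snd z)" for z by (simp add: pol_def Pt_def)
    ultimately show ?thesis by (simp add: p2_def)
  qed
  show ?thesis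
    using step1 step2 step3 step4 step5 box_integral[OF tf r] by simp
qed

lemma disc_perimeter: "r > 0 \<Longrightarrow> perimeter (cball 0 r) \<le> ereal (2*pi*r)"
  unfolding perimeter_def
  by (rule SUP_least) (simp add: disc_integral)


lemma ereal_aux:
  assumes t: "0 < t" and m: "0 < m" and p: "0 \<le> p" and pp: "ereal t * p \<le> p'"
  shows "(p / ereal m) / ereal t \<le> p' / ereal (t^2 * m)"
proof (cases p)
  case (real a)
  then show ?thesis
  proof (cases p')
    case (real b)
    have "t * a \<le> b" using pp \<open>p = ereal a\<close> real by simp
    then have "a / m / t \<le> b / (t^2 * m)" using t m by (simp add: field_simps power2_eq_square)
    then show ?thesis using \<open>p = ereal a\<close> real t m by simp
  next
    case PInf then show ?thesis using t m by simp
  next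
    case MInf then show ?thesis using pp p t \<open>p = ereal a\<close> by simp
  qed
next
  case PInf
  then have "p' = \<infinity>" using pp t by auto
  then show ?thesis using t m by simp
next
  case MInf then show ?thesis using p by simp
qed

lemma cheeger_nonneg: "0 \<le> cheeger \<Omega>"
  unfolding cheeger_def
  by (rule INF_greatest) (auto intro!: zero_le_divide_ereal perimeter_nonneg)

lemma cheeger_le:
  "E \<in> sets lebesgue \<Longrightarrow> E \<subseteq> \<Omega> \<Longrightarrow> measure lebesgue E > 0 \<Longrightarrow>
   cheeger \<Omega> \<le> perimeter E / ereal (measure lebesgue E)"
  unfolding cheeger_def by (rule INF_lower) auto

lemma measure_cball2: "r \<ge> 0 \<Longrightarrow> measure lebesgue (cball (0::real^2) r) = pi * r^2"
proof -
  assume r: "r \<ge> 0"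
  have "measure lebesgue (cball (0::real^2) r) = measure lborel (cball (0::real^2) r)"
    by (rule measure_completion) simp
  also have "\<dots> = unit_ball_vol (real DIM(real^2)) * r ^ DIM(real^2)"
    by (rule content_cball[OF r])
  also have "\<dots> = pi * r^2" by (simp add: unit_ball_vol_2)
  finally show ?thesis .
qed

lemma cheeger_disc:
  assumes r: "r > 0" and sub: "cball 0 r \<subseteq> \<Omega>"
  shows "cheeger \<Omega> \<le> ereal (2 / r)"
proof -
  have m: "measure lebesgue (cball (0::real^2) r) = pi * r^2" using measure_cball2 r by simp
  have "cheeger \<Omega> \<le> perimeter (cball 0 r) / ereal (measure lebesgue (cball (0::real^2) r))"
    by (rule cheeger_le[OF _ sub]) (use m r in \<open>auto simp: borel_lebesgue\<close>)
  also have "\<dots> \<le> ereal (2*pi*r) / ereal (pi * r^2)"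
    unfolding m by (rule ereal_divide_right_mono[OF disc_perimeter[OF r]]) (use r in simp)
  also have "\<dots> = ereal (2 / r)" using r by (simp add: power2_eq_square)
  finally show ?thesis .
qed

lemma scale_image_vimage:
  assumes "t > 0"
  shows "(*\<^sub>R) (1/t) ` (E::(real^2) set) = (*\<^sub>R) t -` E"
proof
  show "(*\<^sub>R) (1/t) ` E \<subseteq> (*\<^sub>R) t -` E" using assms by auto
  show "(*\<^sub>R) t -` E \<subseteq> (*\<^sub>R) (1/t) ` E"
  proof
    fix x assume "x \<in> (*\<^sub>R) t -` E"
    then have "t *\<^sub>R x \<in> E" by simp
    moreover have "x = (1/t) *\<^sub>R (t *\<^sub>R x)" using assms by simp
    ultimately show "x \<in> (*\<^sub>R) (1/t) ` E" by blast
  qed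
qed

lemma cheeger_scale:
  assumes t: "t > 0" and sub: "\<Omega>1 \<subseteq> (*\<^sub>R) t ` \<Omega>2"
  shows "cheeger \<Omega>2 / ereal t \<le> cheeger \<Omega>1"
  unfolding cheeger_def[of \<Omega>1]
proof (rule INF_greatest)
  fix E' assume "E' \<in> {E. E \<in> sets lebesgue \<and> E \<subseteq> \<Omega>1 \<and> 0 < measure lebesgue E}"
  then have E'm: "E' \<in> sets lebesgue" and E'sub: "E' \<subseteq> \<Omega>1" and E'pos: "0 < measure lebesgue E'"
    by auto
  define E where "E = (*\<^sub>R) (1/t) ` E'"
  have Em: "E \<in> sets lebesgue"
    unfolding E_def scale_image_vimage[OF t]
    using measurable_sets[OF lebesgue_measurable_scaling E'm] by simp
  have Esub: "E \<subseteq> \<Omega>2"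
  proof
    fix x assume "x \<in> E"
    then obtain y where y: "y \<in> E'" "x = (1/t) *\<^sub>R y" unfolding E_def by auto
    then obtain z where z: "z \<in> \<Omega>2" "y = t *\<^sub>R z" using E'sub sub by blast
    have "x = z" using y z t by simp
    then show "x \<in> \<Omega>2" using z by simp
  qed
  have E'E: "E' = (*\<^sub>R) t ` E"
  proof -
    have "(*\<^sub>R) t ` E = (\<lambda>y. t *\<^sub>R ((1/t) *\<^sub>R y)) ` E'" unfolding E_def by (simp add: image_image)
    also have "\<dots> = E'" using t by simp
    finally show ?thesis by simp
  qed
  have mE: "measure lebesgue E' = t^2 * measure lebesgue E"
  proof -
    have "measure lebesgue ((\<lambda>x. t *\<^sub>R x + 0) ` E) = \<bar>t\<bar> ^ DIM(real^2) * measure lebesgue E"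
      by (rule measure_lebesgue_affine)
    then show ?thesis using t E'E by simp
  qed
  have Epos: "0 < measure lebesgue E" using mE E'pos t
    by (metis mult_eq_0_iff measure_nonneg order_le_less zero_less_power2 less_irrefl)
  have "cheeger \<Omega>2 / ereal t \<le> (perimeter E / ereal (measure lebesgue E)) / ereal t"
    by (rule ereal_divide_right_mono[OF cheeger_le[OF Em Esub Epos]]) (use t in simp)
  also have "\<dots> \<le> perimeter E' / ereal (t^2 * measure lebesgue E)"
    by (rule ereal_aux[OF t Epos perimeter_nonneg]) (use perimeter_scale[OF Em t] E'E in simp)
  also have "\<dots> = perimeter E' / ereal (measure lebesgue E')" using mE by simp
  finally show "cheeger \<Omega>2 / ereal t \<le> perimeter E' / ereal (measure lebesgue E')" .
qed

lemma cball_sub: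
  assumes cp: "compact \<Omega>" and st: "starshaped0 \<Omega>" and r: "r > 0"
    and f: "\<forall>\<theta>\<in>{0..<2*pi}. radial_fun \<Omega> \<theta> \<ge> r"
  shows "cball 0 r \<subseteq> \<Omega>"
proof
  fix x :: "real^2" assume x: "x \<in> cball 0 r"
  obtain t where t: "0 \<le> t" "t < 2*pi" "x = norm x *\<^sub>R dir t" by (rule polar_exists)
  have "r \<le> radial_fun \<Omega> t" using f t by auto
  moreover have "norm x \<le> r" using x by simp
  ultimately have "norm x \<le> radial_fun \<Omega> t" by linarith
  then have "norm x *\<^sub>R dir t \<in> \<Omega>" using mem_starshaped_iff[OF cp st t(1,2)] by simp
  then show "x \<in> \<Omega>" using t(3) by simp
qed

lemma incl_scale:
  assumes cp1: "compact \<Omega>1" and st1: "starshaped0 \<Omega>1"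
    and cp2: "compact \<Omega>2" and st2: "starshaped0 \<Omega>2" and r: "r > 0" and e: "\<epsilon> \<ge> 0"
    and f2: "\<forall>\<theta>\<in>{0..<2*pi}. radial_fun \<Omega>2 \<theta> \<ge> r"
    and d: "\<And>\<theta>. 0 \<le> \<theta> \<Longrightarrow> \<theta> < 2*pi \<Longrightarrow> \<bar>radial_fun \<Omega>1 \<theta> - radial_fun \<Omega>2 \<theta>\<bar> \<le> \<epsilon>"
  shows "\<Omega>1 \<subseteq> (*\<^sub>R) (1 + \<epsilon>/r) ` \<Omega>2"
proof
  fix x :: "real^2" assume x: "x \<in> \<Omega>1"
  let ?t = "1 + \<epsilon>/r"
  have tpos: "?t > 0" using r e by (simp add: add_pos_nonneg)
  obtain t where t: "0 \<le> t" "t < 2*pi" "x = norm x *\<^sub>R dir t" by (rule polar_exists)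
  have "norm x \<le> radial_fun \<Omega>1 t" using mem_starshaped_iff[OF cp1 st1 t(1,2)] x t(3) by (metis norm_ge_zero)
  also have "\<dots> \<le> radial_fun \<Omega>2 t + \<epsilon>" using d[OF t(1,2)] by linarith
  also have "\<dots> \<le> radial_fun \<Omega>2 t * ?t"
  proof -
    have "\<epsilon> \<le> \<epsilon> / r * radial_fun \<Omega>2 t"
    proof -
      have "\<epsilon> / r * r \<le> \<epsilon> / r * radial_fun \<Omega>2 t"
        using f2 t r e by (intro mult_left_mono) auto
      then show ?thesis using r by simp
    qed
    then show ?thesis by (simp add: algebra_simps)
  qed
  finally have le: "norm x / ?t \<le> radial_fun \<Omega>2 t" using tpos by (simp add: divide_le_eq)
  have "(norm x / ?t) *\<^sub>R dir t \<in> \<Omega>2"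
    using mem_starshaped_iff[OF cp2 st2 t(1,2)] le tpos by simp
  moreover have "x = ?t *\<^sub>R ((norm x / ?t) *\<^sub>R dir t)" using tpos t(3) by simp
  ultimately show "x \<in> (*\<^sub>R) ?t ` \<Omega>2" by blast
qed

lemma cheeger_main:
  fixes \<Omega>1 \<Omega>2 :: "(real^2) set" and r0 :: real
  assumes cp1: "compact \<Omega>1" and cp2: "compact \<Omega>2"
    and st1: "starshaped0 \<Omega>1" and st2: "starshaped0 \<Omega>2"
    and r: "r0 > 0"
    and f1: "\<forall>\<theta>\<in>{0..<2*pi}. radial_fun \<Omega>1 \<theta> \<ge> r0"
    and f2: "\<forall>\<theta>\<in>{0..<2*pi}. radial_fun \<Omega>2 \<theta> \<ge> r0"
  shows "\<bar>cheeger \<Omega>1 - cheeger \<Omega>2\<bar>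
           \<le> ereal (2 / r0^2 * sup_norm (\<lambda>\<theta>. radial_fun \<Omega>1 \<theta> - radial_fun \<Omega>2 \<theta>))"
proof -
  let ?f1 = "radial_fun \<Omega>1" and ?f2 = "radial_fun \<Omega>2"
  let ?e = "sup_norm (\<lambda>\<theta>. ?f1 \<theta> - ?f2 \<theta>)"
  obtain R1 where R1: "R1 \<ge> 0" "\<And>t. ?f1 t \<le> R1" "\<And>x. x \<in> \<Omega>1 \<Longrightarrow> norm x \<le> R1"
    by (rule radial_fun_bound[OF cp1 st1]) blast
  obtain R2 where R2: "R2 \<ge> 0" "\<And>t. ?f2 t \<le> R2" "\<And>x. x \<in> \<Omega>2 \<Longrightarrow> norm x \<le> R2"
    by (rule radial_fun_bound[OF cp2 st2]) blast
  have s3: "\<bar>?f1 t - ?f2 t\<bar> \<le> ?e" if "0 \<le> t" "t < 2*pi" for t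
  proof (rule sup_norm_ge[OF _ that, where B = "R1 + R2"])
    fix t
    show "\<bar>?f1 t - ?f2 t\<bar> \<le> R1 + R2"
      using R1(2)[of t] R2(2)[of t] radial_fun_props(1)[OF cp1 st1, of t] radial_fun_props(1)[OF cp2 st2, of t]
      by linarith
  qed
  have s3': "\<bar>?f2 t - ?f1 t\<bar> \<le> ?e" if "0 \<le> t" "t < 2*pi" for t
    using s3[OF that] by (simp add: abs_minus_commute)
  have e0: "0 \<le> ?e" using s3[of 0] abs_ge_zero order_trans by fastforce
  let ?t = "1 + ?e / r0"
  have tpos: "?t > 0" using r e0 by (simp add: add_pos_nonneg)
  have i1: "\<Omega>1 \<subseteq> (*\<^sub>R) ?t ` \<Omega>2" by (rule incl_scale[OF cp1 st1 cp2 st2 r e0 f2 s3])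
  have i2: "\<Omega>2 \<subseteq> (*\<^sub>R) ?t ` \<Omega>1" by (rule incl_scale[OF cp2 st2 cp1 st1 r e0 f1 s3'])
  have c1: "cheeger \<Omega>2 / ereal ?t \<le> cheeger \<Omega>1" by (rule cheeger_scale[OF tpos i1])
  have c2: "cheeger \<Omega>1 / ereal ?t \<le> cheeger \<Omega>2" by (rule cheeger_scale[OF tpos i2])
  have u1: "cheeger \<Omega>1 \<le> ereal (2 / r0)" by (rule cheeger_disc[OF r cball_sub[OF cp1 st1 r f1]])
  have u2: "cheeger \<Omega>2 \<le> ereal (2 / r0)" by (rule cheeger_disc[OF r cball_sub[OF cp2 st2 r f2]])
  obtain a1 where a1: "cheeger \<Omega>1 = ereal a1" "0 \<le> a1" "a1 \<le> 2 / r0"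
    using cheeger_nonneg[of \<Omega>1] u1 by (cases "cheeger \<Omega>1") auto
  obtain a2 where a2: "cheeger \<Omega>2 = ereal a2" "0 \<le> a2" "a2 \<le> 2 / r0"
    using cheeger_nonneg[of \<Omega>2] u2 by (cases "cheeger \<Omega>2") auto
  have b1: "a2 / ?t \<le> a1" using c1 a1 a2 tpos by simp
  have b2: "a1 / ?t \<le> a2" using c2 a1 a2 tpos by simp
  have k1: "a2 \<le> a1 + a1 * (?e / r0)" using b1 tpos by (simp add: divide_le_eq algebra_simps)
  have k2: "a1 \<le> a2 + a2 * (?e / r0)" using b2 tpos by (simp add: divide_le_eq algebra_simps)
  have "a1 * (?e / r0) \<le> (2 / r0) * (?e / r0)" using a1 e0 r by (intro mult_right_mono) auto
  moreover have "a2 * (?e / r0) \<le> (2 / r0) * (?e / r0)" using a2 e0 r by (intro mult_right_mono) auto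
  moreover have "(2 / r0) * (?e / r0) = 2 / r0^2 * ?e" by (simp add: power2_eq_square)
  ultimately have "\<bar>a1 - a2\<bar> \<le> 2 / r0^2 * ?e" using k1 k2 by linarith
  then show ?thesis using a1 a2 by simp
qed

theorem lemma2p4:
  fixes \<Omega>1 \<Omega>2 :: "(real^2) set" and r0 :: real
  assumes "compact \<Omega>1" and "compact \<Omega>2"
    and "starshaped0 \<Omega>1" and "starshaped0 \<Omega>2"
    and "r0 > 0"
    and "\<forall>\<theta>\<in>{0..<2*pi}. radial_fun \<Omega>1 \<theta> \<ge> r0"
    and "\<forall>\<theta>\<in>{0..<2*pi}. radial_fun \<Omega>2 \<theta> \<ge> r0"
  shows "\<bar>cheeger \<Omega>1 - cheeger \<Omega>2\<bar>
           \<le> ereal (2 / r0^2 * sup_norm (\<lambda>\<theta>. radial_fun \<Omega>1 \<theta> - radial_fun \<Omega>2 \<theta>))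
    \<and> \<bar>measure lebesgue \<Omega>1 - measure lebesgue \<Omega>2\<bar>
           \<le> 2 * pi * max (sup_norm (radial_fun \<Omega>1)) (sup_norm (radial_fun \<Omega>2))
               * sup_norm (\<lambda>\<theta>. radial_fun \<Omega>1 \<theta> - radial_fun \<Omega>2 \<theta>)"
  using cheeger_main[OF assms] area_main[OF assms(1,3,2,4)] by blast

end
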